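(* Suppose Assumptions (A1), (A2), (A4) hold, $F^*>-\infty$, and the parameters of MoSSP-R satisfy, for all $k\ge0$: $\mu_kL_{\rho_k}\le\frac14$, $\mu_{k+1}\le\mu_k$, $\rho_k\le\rho_{k+1}$, $0<\beta\le1$, and $0<32\mu_k^2L_f^2\le\alpha_k\le1$. Let $\{\bm w^k\}$ be generated by MoSSP-R. Then for any $K\ge1$, $$\frac1K\sum_{k=0}^{K-1}\alpha_k\mathbb{E}\|\bm e^k\|^2\le\frac{32\mu_0L_f^2(\mathcal{L}_{\rho_0,\mu_0}(\bm w^0)-\mathcal{L}^* )}{K}+\frac{2\mathbb{E}\|\bm e^0\|^2}{K}+\frac{32\mu_0L_f^2}{K}\sum_{k=0}^{K-1}\Big(\frac{\rho_{k+1}-\rho_k}{2}C^2+\mathbb{E}[\Delta_{k+1}]\Big)+\frac1K\sum_{k=0}^{K-1}4\alpha_k^2\sigma^2.$$ Furthermore, if $\mu_k\equiv\mu$, $\alpha_k\equiv\alpha$, $\rho_k\equiv\rho$ for all $k\ge0$, then $$\frac1K\sum_{k=0}^{K-1}\mathbb{E}\|\bm e^k\|^2\le\frac{32\mu L_f^2(\mathcal{L}_{\rho,\mu}(\bm w^0)-\mathcal{L}^* )}{\alpha K}+\frac{2\mathbb{E}\|\bm e^0\|^2}{\alpha K}+4\alpha\sigma^2.$$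
   Context: Problem data: $f(\bm x)=\mathbb{E}_\xi[\mathbf f(\bm x,\xi)]$ ($\xi\sim\Xi$), $f$ and $\bm c:\mathbb{R}^n\to\mathbb{R}^m$ continuously differentiable, $h:\mathbb{R}^n\to\mathbb{R}\cup\{+\infty\}$, $g:\mathbb{R}^n\to\mathbb{R}$ proper closed convex; $F^*:=\inf_{\bm x}\{f+h-g\}(\bm x)$; $\nabla\bm c(\bm x):=J_{\bm c}(\bm x)^\top$; $Q_\rho(\bm x):=f(\bm x)+\frac\rho2\|\bm c(\bm x)\|^2$; $\mathrm{prox}_{\mu\varphi}$ and Moreau envelope $\mathcal{M}_{\mu\varphi}(\bm z)=\min_{\bm x}\{\varphi(\bm x)+\frac1{2\mu}\|\bm x-\bm z\|^2\}$. Potential $\mathcal{L}_{\rho,\mu}(\bm x,\bm z):=Q_\rho(\bm x)+h(\bm x)+\frac1{2\mu}\|\bm x-\bm z\|^2-\mathcal{M}_{\mu g}(\bm z)$; $\mathcal{L}^*:=F^*-\frac{G^2\bar\mu}2$ with $\bar\mu$ a constant such that $\mu_k\le\bar\mu$ for all $k$; $\Delta_{k+1}:=\frac{|\mu_k-\mu_{k+1}|}{2\mu_{k+1}^2}(C^2+\|\bm x^{k+1}-\bm z^{k+1}\|^2)$. Parameter sequences $(\rho_k)_{k\ge0},(\mu_k)_{k\ge0}$ ($\rho_0,\mu_0$ first terms); $L_\rho:=\rho\tilde L$, $\tilde L=\rho_0^{-1}L_f+G^2+CL_c$. (A1): $f$ is $L_f$-smooth, $\nabla\bm c$ is $L_c$-Lipschitz,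 and there are $C,G>0$ with $\|\nabla f(\bm x)\|\le G$, all subgradients of $h$ and of $g$ have norm $\le G$, $\|\nabla\bm c(\bm x)\|\le G$, $\|\bm c(\bm x)\|\le C$ for all $\bm x$. (A2): $\mathbb{E}_\xi[\nabla\mathbf f(\bm x,\xi)]=\nabla f(\bm x)$, $\mathbb{E}_\xi\|\nabla\mathbf f(\bm x,\xi)-\nabla f(\bm x)\|^2\le\sigma^2$. (A4): for a.e. $\xi$, $\mathbf f(\cdot,\xi)$ differentiable and $\mathbb{E}_\xi\|\nabla\mathbf f(\bm x,\xi)-\nabla\mathbf f(\bm y,\xi)\|^2\le L_f^2\|\bm x-\bm y\|^2$ for all $\bm x,\bm y$. MoSSP-R: $\bm x^0=\bm z^0$; $\bm d^0=\frac1{b_0}\sum_{j=1}^{b_0}\nabla\mathbf f(\bm x^0,\xi^0_j)$ (i.i.d. batch); for $k\ge1$ fresh i.i.d. $\xi^k$, $\bm d^k=\nabla\mathbf f(\bm x^k,\xi^k)+(1-\alpha_{k-1})(\bm d^{k-1}-\nabla\mathbf f(\bm x^{k-1},\xi^k))$; $\bm D^k=\bm d^k+\rho_k\nabla\bm c(\bm x^k)\bm c(\bm x^k)$; $\bm x^{k+1}=\mathrm{prox}_{\mu_k h}(\bm z^k-\mu_k\bm D^k)$, $\bm z^{k+1}=\bm z^k-\beta(\mathrm{prox}_{\mu_k g}(\bm z^k)-\bm x^{k+1})$; $\bm w^k=(\bm x^k,\bm z^k)$; $\bm e^k:=\bm D^k-\nabla Q_{\rho_k}(\bm x^k)$. 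*)

theory Defs
  imports "HOL-Probability.Probability"
begin

definition subdiff :: "('a::real_inner \<Rightarrow> real) \<Rightarrow> 'a \<Rightarrow> 'a set" where
  "subdiff \<phi> x = {v. \<forall>y. \<phi> y \<ge> \<phi> x + v \<bullet> (y - x)}"

definition prox :: "real \<Rightarrow> ('a::real_normed_vector \<Rightarrow> real) \<Rightarrow> 'a \<Rightarrow> 'a" where
  "prox \<mu> \<phi> z = (SOME x. \<forall>y. \<phi> x + (norm (x - z))\<^sup>2 / (2 * \<mu>) \<le> \<phi> y + (norm (y - z))\<^sup>2 / (2 * \<mu>))"

definition moreau :: "real \<Rightarrow> ('a::real_normed_vector \<Rightarrow> real) \<Rightarrow> 'a \<Rightarrow> real" where
  "moreau \<mu> \<phi> z = (INF x. \<phi> x + (norm (x - z))\<^sup>2 / (2 * \<mu>))"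

text \<open>nabla c(x) := J_c(x)^T, i.e. the adjoint of the derivative Dc x of c at x.\<close>
definition gradc :: "('a::real_inner \<Rightarrow> 'a \<Rightarrow> 'b::real_inner) \<Rightarrow> 'a \<Rightarrow> 'b \<Rightarrow> 'a" where
  "gradc Dc x = adjoint (Dc x)"

definition Qpen :: "('a \<Rightarrow> real) \<Rightarrow> ('a \<Rightarrow> 'b::real_normed_vector) \<Rightarrow> real \<Rightarrow> 'a \<Rightarrow> real" where
  "Qpen f c \<rho> x = f x + \<rho> / 2 * (norm (c x))\<^sup>2"

definition gradQ :: "('a::real_inner \<Rightarrow> 'a) \<Rightarrow> ('a \<Rightarrow> 'a \<Rightarrow> 'b::real_inner) \<Rightarrow> ('a \<Rightarrow> 'b)
    \<Rightarrow> real \<Rightarrow> 'a \<Rightarrow> 'a" where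
  "gradQ gradf Dc c \<rho> x = gradf x + \<rho> *\<^sub>R gradc Dc x (c x)"

definition Lpot :: "('a::real_normed_vector \<Rightarrow> real) \<Rightarrow> ('a \<Rightarrow> 'b::real_normed_vector) \<Rightarrow> ('a \<Rightarrow> real)
    \<Rightarrow> ('a \<Rightarrow> real) \<Rightarrow> real \<Rightarrow> real \<Rightarrow> 'a \<Rightarrow> 'a \<Rightarrow> real" where
  "Lpot f c h g \<rho> \<mu> x z = Qpen f c \<rho> x + h x + (norm (x - z))\<^sup>2 / (2 * \<mu>) - moreau \<mu> g z"

definition Fstar :: "('a \<Rightarrow> real) \<Rightarrow> ('a \<Rightarrow> real) \<Rightarrow> ('a \<Rightarrow> real) \<Rightarrow> real" where
  "Fstar f h g = (INF x. f x + h x - g x)"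

end

theory Submission
  imports Defs
begin

lemma norm_add_sq: "(norm (a + b))\<^sup>2 = (norm a)\<^sup>2 + 2 * (a \<bullet> b) + (norm (b::'a::real_inner))\<^sup>2"
  by (simp add: power2_norm_eq_inner inner_add inner_commute)

lemma norm_diff_sq: "(norm (a - b))\<^sup>2 = (norm a)\<^sup>2 - 2 * (a \<bullet> b) + (norm (b::'a::real_inner))\<^sup>2"
  by (simp add: power2_norm_eq_inner inner_diff inner_commute)

lemma eps_lemma:
  fixes a b :: real
  assumes "\<And>t. 0 < t \<Longrightarrow> t \<le> 1 \<Longrightarrow> 0 \<le> a + t * b" "b \<ge> 0"
  shows "0 \<le> a"
proof (rule ccontr)
  assume "\<not> 0 \<le> a"
  define t where "t = min 1 (- a / (2 * b + 1))"
  have "0 < - a / (2 * b + 1)" using \<open>\<not> 0 \<le> a\<close> assms(2) by (intro divide_pos_pos) auto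
  then have t0: "0 < t" "t \<le> 1" by (auto simp: t_def)
  have "t * b \<le> (- a / (2 * b + 1)) * b" using assms(2) by (intro mult_right_mono) (auto simp: t_def)
  also have "\<dots> < - a"
  proof -
    have "(- a / (2 * b + 1)) * b = - a * (b / (2*b+1))" by simp
    also have "\<dots> < - a * 1" using \<open>\<not> 0 \<le> a\<close> assms(2)
      by (intro mult_strict_left_mono) (auto simp: field_simps)
    finally show ?thesis by simp
  qed
  finally have "a + t * b < 0" by simp
  with assms(1)[OF t0] show False by simp
qed

lemma convex_lower_linear:
  fixes h :: "'a::euclidean_space \<Rightarrow> real"
  assumes cvx: "convex_on UNIV h"
  shows "\<exists>A\<ge>0. \<forall>y. h u - A - A * norm (y - u) \<le> h y"
proof -
  have cont: "continuous_on UNIV h" using convex_on_continuous[OF open_UNIV cvx] .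
  have ne: "cball u 1 \<noteq> {}" by simp
  obtain w where w: "w \<in> cball u 1" "\<forall>y\<in>cball u 1. h w \<le> h y"
    using continuous_attains_inf[OF compact_cball ne continuous_on_subset[OF cont subset_UNIV]] by blast
  define A where "A = \<bar>h u - h w\<bar>"
  have "\<forall>y. h u - A - A * norm (y - u) \<le> h y"
  proof
    fix y
    show "h u - A - A * norm (y - u) \<le> h y"
    proof (cases "norm (y - u) \<le> 1")
      case True
      then have "h w \<le> h y" using w by (auto simp: dist_norm norm_minus_commute)
      moreover have "0 \<le> A * norm (y - u)" by (simp add: A_def)
      moreover have "h u - A \<le> h w" by (simp add: A_def)
      ultimately show ?thesis by linarith
    next
      case False
      define r where "r = norm (y - u)"
      have r1: "r > 1" using False by (simp add: r_def)
      define t where "t = 1 / r"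
      have t: "0 \<le> t" "t \<le> 1" "t > 0" using r1 by (auto simp: t_def)
      have "(1 - t) *\<^sub>R u + t *\<^sub>R y = u + t *\<^sub>R (y - u)" by (simp add: algebra_simps)
      moreover have "norm (t *\<^sub>R (y - u)) = 1" using r1 by (cases "y = u") (auto simp: t_def r_def)
      ultimately have inb: "(1 - t) *\<^sub>R u + t *\<^sub>R y \<in> cball u 1" by (simp add: dist_norm)
      have "h w \<le> h ((1 - t) *\<^sub>R u + t *\<^sub>R y)" using w inb by auto
      also have "\<dots> \<le> (1 - t) * h u + t * h y"
        using convex_onD[OF cvx, of t u y] t by auto
      finally have "h w \<le> (1 - t) * h u + t * h y" .
      then have "r * h w \<le> r * ((1 - t) * h u + t * h y)" using r1 by (intro mult_left_mono) auto
      moreover have "r * t = 1" using r1 by (simp add: t_def)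
      moreover have "r * ((1 - t) * h u + t * h y) = (r - r * t) * h u + (r * t) * h y" by (simp add: algebra_simps)
      ultimately have "r * h w \<le> (r - 1) * h u + h y" by simp
      then have "h u + r * (h w - h u) \<le> h y" by (simp add: algebra_simps)
      moreover have "- A * r \<le> r * (h w - h u)"
      proof -
        have "- A \<le> h w - h u" by (simp add: A_def)
        then have "r * (- A) \<le> r * (h w - h u)" using r1 by (intro mult_left_mono) auto
        then show ?thesis by (simp add: mult.commute)
      qed
      moreover have "0 \<le> A" by (simp add: A_def)
      ultimately show ?thesis by (simp add: r_def)
    qed
  qed
  then show ?thesis by (intro exI[of _ A]) (simp add: A_def)
qed

lemma prox_exists:
  fixes h :: "'a::euclidean_space \<Rightarrow> real"
  assumes cvx: "convex_on UNIV h" and mu: "\<mu> > 0"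
  shows "\<exists>p. \<forall>y. h p + (norm (p - u))\<^sup>2 / (2 * \<mu>) \<le> h y + (norm (y - u))\<^sup>2 / (2 * \<mu>)"
proof -
  define \<Phi> where "\<Phi> y = h y + (norm (y - u))\<^sup>2 / (2 * \<mu>)" for y
  have cont: "continuous_on UNIV h" using convex_on_continuous[OF open_UNIV cvx] .
  have contP: "continuous_on UNIV \<Phi>" unfolding \<Phi>_def
    using mu by (intro continuous_intros cont) auto
  obtain A where A: "A \<ge> 0" "\<And>y. h u - A - A * norm (y - u) \<le> h y"
    using convex_lower_linear[OF cvx, of u] by auto
  define R where "R = 2 * \<mu> * (2 * A + 1) + 1"
  have R1: "R \<ge> 1"
  proof -
    have "0 \<le> 2 * \<mu> * (2 * A + 1)" using A mu by simp
    then show ?thesis by (simp add: R_def)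
  qed
  have ne: "cball u R \<noteq> {}" using R1 by simp
  obtain p where p: "p \<in> cball u R" "\<forall>y\<in>cball u R. \<Phi> p \<le> \<Phi> y"
    using continuous_attains_inf[OF compact_cball ne continuous_on_subset[OF contP subset_UNIV]] by blast
  have "\<forall>y. \<Phi> p \<le> \<Phi> y"
  proof
    fix y
    show "\<Phi> p \<le> \<Phi> y"
    proof (cases "y \<in> cball u R")
      case True then show ?thesis using p by auto
    next
      case False
      define r where "r = norm (y - u)"
      have rR: "r > R" using False by (simp add: r_def dist_norm norm_minus_commute)
      have r1: "r \<ge> 1" using rR R1 by simp
      have "r - 1 > 2 * \<mu> * (2 * A + 1)" using rR by (simp add: R_def)
      then have "r > 2 * \<mu> * (2 * A + 1)" by simp
      then have "r / (2 * \<mu>) > 2 * A + 1" using mu by (simp add: field_simps)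
      then have "r * (r / (2 * \<mu>)) \<ge> r * (2 * A + 1)" using r1 by (intro mult_left_mono) auto
      moreover have "r * (r / (2 * \<mu>)) = r\<^sup>2 / (2 * \<mu>)" by (simp add: power2_eq_square)
      moreover have "r * (2 * A + 1) = A * r + A * r + r" by (simp add: algebra_simps)
      moreover have "A * r \<ge> A * 1" using A r1 by (intro mult_left_mono) auto
      ultimately have q: "r\<^sup>2 / (2 * \<mu>) \<ge> A * r + A + 1" using r1 by linarith
      have "\<Phi> p \<le> \<Phi> u" using p R1 by auto
      also have "\<Phi> u = h u" by (simp add: \<Phi>_def)
      also have "h u < \<Phi> y" using A(2)[of y] q by (simp add: \<Phi>_def r_def)
      finally show ?thesis by simp
    qed
  qed
  then show ?thesis unfolding \<Phi>_def by blast
qed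

lemma prox_min:
  fixes h :: "'a::euclidean_space \<Rightarrow> real"
  assumes cvx: "convex_on UNIV h" and mu: "\<mu> > 0"
  shows "h (prox \<mu> h u) + (norm (prox \<mu> h u - u))\<^sup>2 / (2 * \<mu>) \<le> h y + (norm (y - u))\<^sup>2 / (2 * \<mu>)"
  using someI_ex[OF prox_exists[OF cvx mu, of u]] unfolding prox_def by blast

lemma prox_subgrad:
  fixes h :: "'a::euclidean_space \<Rightarrow> real"
  assumes cvx: "convex_on UNIV h" and mu: "\<mu> > 0"
  shows "h (prox \<mu> h u) + ((1 / \<mu>) *\<^sub>R (u - prox \<mu> h u)) \<bullet> (y - prox \<mu> h u) \<le> h y"
proof -
  define p where "p = prox \<mu> h u"
  have key: "0 \<le> (h y - h p + ((p - u) \<bullet> (y - p)) / \<mu>) + t * ((norm (y - p))\<^sup>2 / (2 * \<mu>))"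
    if t: "0 < t" "t \<le> 1" for t
  proof -
    define S X N where "S = (norm (p - u))\<^sup>2" and "X = (p - u) \<bullet> (y - p)" and "N = (norm (y - p))\<^sup>2"
    have "h p + S / (2 * \<mu>) \<le> h ((1 - t) *\<^sub>R p + t *\<^sub>R y) + (norm ((1 - t) *\<^sub>R p + t *\<^sub>R y - u))\<^sup>2 / (2 * \<mu>)"
      using prox_min[OF cvx mu, of u] unfolding p_def S_def by blast
    also have "h ((1 - t) *\<^sub>R p + t *\<^sub>R y) \<le> (1 - t) * h p + t * h y"
      using convex_onD[OF cvx, of t p y] t by auto
    also have "(1 - t) *\<^sub>R p + t *\<^sub>R y - u = (p - u) + t *\<^sub>R (y - p)" by (simp add: algebra_simps)
    also have "(norm ((p - u) + t *\<^sub>R (y - p)))\<^sup>2 = S + (2 * t * X + t\<^sup>2 * N)"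
      by (simp add: norm_add_sq power_mult_distrib S_def X_def N_def)
    also have "(S + (2 * t * X + t\<^sup>2 * N)) / (2 * \<mu>) = S / (2 * \<mu>) + (2 * t * X + t\<^sup>2 * N) / (2 * \<mu>)"
      by (rule add_divide_distrib)
    finally have A: "h p + S / (2 * \<mu>) \<le> (1 - t) * h p + t * h y + (S / (2 * \<mu>) + (2 * t * X + t\<^sup>2 * N) / (2 * \<mu>))" by simp
    have B: "(1 - t) * h p = h p - t * h p" by (simp add: algebra_simps)
    have C: "(2 * t * X + t\<^sup>2 * N) / (2 * \<mu>) = t * (X / \<mu> + t * (N / (2 * \<mu>)))"
      using mu by (simp add: field_simps power2_eq_square)
    have "0 \<le> t * (h y - h p) + t * (X / \<mu> + t * (N / (2 * \<mu>)))" using A B C by (simp add: algebra_simps)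
    also have "\<dots> = t * ((h y - h p + X / \<mu>) + t * (N / (2 * \<mu>)))" by (simp add: algebra_simps)
    finally show ?thesis using t by (simp add: zero_le_mult_iff X_def N_def)
  qed
  have "0 \<le> h y - h p + ((p - u) \<bullet> (y - p)) / \<mu>"
    by (rule eps_lemma[OF key]) (use mu in auto)
  moreover have "((1 / \<mu>) *\<^sub>R (u - p)) \<bullet> (y - p) = - (((p - u) \<bullet> (y - p)) / \<mu>)"
    using mu by (simp add: inner_diff_left field_simps)
  ultimately have "h p + ((1 / \<mu>) *\<^sub>R (u - p)) \<bullet> (y - p) \<le> h y" by linarith
  then show ?thesis unfolding p_def .
qed

lemma prox_three:
  fixes h :: "'a::euclidean_space \<Rightarrow> real"
  assumes cvx: "convex_on UNIV h" and mu: "\<mu> > 0"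
  shows "h (prox \<mu> h u) + (norm (prox \<mu> h u - u))\<^sup>2 / (2 * \<mu>) + (norm (y - prox \<mu> h u))\<^sup>2 / (2 * \<mu>)
         \<le> h y + (norm (y - u))\<^sup>2 / (2 * \<mu>)"
proof -
  define p where "p = prox \<mu> h u"
  have s: "h p + ((1 / \<mu>) *\<^sub>R (u - p)) \<bullet> (y - p) \<le> h y" using prox_subgrad[OF cvx mu] p_def by blast
  have s': "h p + ((u - p) \<bullet> (y - p)) / \<mu> \<le> h y" using s by (simp add: inner_scaleR_left)
  have e: "y - u = (y - p) + (p - u)" by simp
  have "(norm (y - u))\<^sup>2 = (norm (y - p))\<^sup>2 + 2 * ((y - p) \<bullet> (p - u)) + (norm (p - u))\<^sup>2"
    by (subst e, rule norm_add_sq)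
  moreover have "(y - p) \<bullet> (p - u) = - ((u - p) \<bullet> (y - p))" by (simp add: inner_commute inner_diff_left inner_diff_right)
  ultimately have "(norm (y - u))\<^sup>2 / (2 * \<mu>) = (norm (y - p))\<^sup>2 / (2 * \<mu>) - ((u - p) \<bullet> (y - p)) / \<mu> + (norm (p - u))\<^sup>2 / (2 * \<mu>)"
    using mu by (simp add: field_simps)
  then show ?thesis using s' unfolding p_def[symmetric] by linarith
qed

lemma prox_nonexp:
  fixes h :: "'a::euclidean_space \<Rightarrow> real"
  assumes cvx: "convex_on UNIV h" and mu: "\<mu> > 0"
  shows "norm (prox \<mu> h u - prox \<mu> h v) \<le> norm (u - v)"
proof -
  define p q where "p = prox \<mu> h u" and "q = prox \<mu> h v"
  have s1: "h p + ((1 / \<mu>) *\<^sub>R (u - p)) \<bullet> (q - p) \<le> h q" using prox_subgrad[OF cvx mu] p_def by blast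
  have s2: "h q + ((1 / \<mu>) *\<^sub>R (v - q)) \<bullet> (p - q) \<le> h p" using prox_subgrad[OF cvx mu] q_def by blast
  have "((u - p) - (v - q)) \<bullet> (p - q) \<ge> 0"
  proof -
    have "((1 / \<mu>) *\<^sub>R (u - p)) \<bullet> (q - p) + ((1 / \<mu>) *\<^sub>R (v - q)) \<bullet> (p - q) \<le> 0" using s1 s2 by simp
    then have "(1 / \<mu>) * (((u - p) - (v - q)) \<bullet> (p - q)) \<ge> 0"
      by (simp add: inner_diff_left inner_diff_right inner_commute algebra_simps)
    then show ?thesis using mu by (simp add: zero_le_divide_iff)
  qed
  then have "(norm (p - q))\<^sup>2 \<le> (u - v) \<bullet> (p - q)"
    by (simp add: power2_norm_eq_inner inner_diff_left inner_diff_right inner_commute algebra_simps)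
  also have "\<dots> \<le> norm (u - v) * norm (p - q)" by (rule norm_cauchy_schwarz)
  finally have "norm (p - q) * norm (p - q) \<le> norm (u - v) * norm (p - q)" by (simp add: power2_eq_square)
  then have "norm (p - q) \<le> norm (u - v)"
    by (cases "norm (p - q) = 0") (auto simp: mult_le_cancel_right)
  then show ?thesis by (simp add: p_def q_def)
qed

lemma prox_cont:
  fixes h :: "'a::euclidean_space \<Rightarrow> real"
  assumes cvx: "convex_on UNIV h" and mu: "\<mu> > 0"
  shows "continuous_on S (prox \<mu> h)"
  by (rule lipschitz_on_continuous_on[of 1]) (auto intro!: lipschitz_onI simp: dist_norm prox_nonexp[OF cvx mu])

lemma prox_subdiff:
  fixes h :: "'a::euclidean_space \<Rightarrow> real"
  assumes cvx: "convex_on UNIV h" and mu: "\<mu> > 0"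
  shows "(1 / \<mu>) *\<^sub>R (u - prox \<mu> h u) \<in> subdiff h (prox \<mu> h u)"
  unfolding subdiff_def using prox_subgrad[OF cvx mu] by auto

lemma moreau_eq:
  fixes g :: "'a::euclidean_space \<Rightarrow> real"
  assumes cvx: "convex_on UNIV g" and mu: "\<mu> > 0"
  shows "moreau \<mu> g z = g (prox \<mu> g z) + (norm (prox \<mu> g z - z))\<^sup>2 / (2 * \<mu>)"
proof -
  define \<Phi> where "\<Phi> x = g x + (norm (x - z))\<^sup>2 / (2 * \<mu>)" for x
  have bdd: "bdd_below (range \<Phi>)"
    by (rule bdd_belowI2[of _ "\<Phi> (prox \<mu> g z)"]) (use prox_min[OF cvx mu] in \<open>auto simp: \<Phi>_def\<close>)
  have "(INF x. \<Phi> x) \<le> \<Phi> (prox \<mu> g z)" by (rule cINF_lower[OF bdd]) simp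
  moreover have "\<Phi> (prox \<mu> g z) \<le> (INF x. \<Phi> x)"
    by (rule cINF_greatest) (use prox_min[OF cvx mu] in \<open>auto simp: \<Phi>_def\<close>)
  ultimately show ?thesis unfolding moreau_def \<Phi>_def by simp
qed

lemma moreau_le:
  fixes g :: "'a::euclidean_space \<Rightarrow> real"
  assumes cvx: "convex_on UNIV g" and mu: "\<mu> > 0"
  shows "moreau \<mu> g z \<le> g y + (norm (y - z))\<^sup>2 / (2 * \<mu>)"
  using moreau_eq[OF cvx mu] prox_min[OF cvx mu] by simp

lemma moreau_anti:
  fixes g :: "'a::euclidean_space \<Rightarrow> real"
  assumes cvx: "convex_on UNIV g" and mu: "\<mu>' > 0" "\<mu>' \<le> \<mu>"
  shows "moreau \<mu> g z \<le> moreau \<mu>' g z"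
proof -
  have "moreau \<mu> g z \<le> g (prox \<mu>' g z) + (norm (prox \<mu>' g z - z))\<^sup>2 / (2 * \<mu>)"
    using moreau_le[OF cvx] mu by auto
  also have "\<dots> \<le> g (prox \<mu>' g z) + (norm (prox \<mu>' g z - z))\<^sup>2 / (2 * \<mu>')"
    using mu by (intro add_left_mono divide_left_mono) auto
  also have "\<dots> = moreau \<mu>' g z" using moreau_eq[OF cvx mu(1)] by simp
  finally show ?thesis .
qed


lemma descent_general:
  fixes \<phi> :: "'a::euclidean_space \<Rightarrow> real"
  assumes der: "\<And>x. (\<phi> has_derivative (\<lambda>v. g\<phi> x \<bullet> v)) (at x)"
    and lip: "\<And>x y. norm (g\<phi> x - g\<phi> y) \<le> L * norm (x - y)"
  shows "\<phi> y \<le> \<phi> x + g\<phi> x \<bullet> (y - x) + L / 2 * (norm (y - x))\<^sup>2"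
proof -
  define v where "v = y - x"
  define \<psi> where "\<psi> t = \<phi> (x + t *\<^sub>R v) - t * (g\<phi> x \<bullet> v) - L / 2 * t\<^sup>2 * (norm v)\<^sup>2" for t :: real
  have d: "(\<psi> has_real_derivative (g\<phi> (x + t *\<^sub>R v) \<bullet> v - g\<phi> x \<bullet> v - L * t * (norm v)\<^sup>2)) (at t)" for t
  proof -
    have dx: "((\<lambda>t. x + t *\<^sub>R v) has_derivative (\<lambda>s. s *\<^sub>R v)) (at t)"
      by (auto intro!: derivative_eq_intros)
    have "((\<lambda>t. \<phi> (x + t *\<^sub>R v)) has_derivative (*) (g\<phi> (x + t *\<^sub>R v) \<bullet> v)) (at t)"
      by (rule has_derivative_eq_rhs[OF has_derivative_compose[OF dx der, unfolded o_def]]) (simp add: fun_eq_iff)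
    then have "((\<lambda>t. \<phi> (x + t *\<^sub>R v)) has_real_derivative (g\<phi> (x + t *\<^sub>R v) \<bullet> v)) (at t)"
      by (simp add: has_field_derivative_def)
    then show ?thesis unfolding \<psi>_def
      by (auto intro!: derivative_eq_intros simp: power2_eq_square)
  qed
  have "\<psi> 1 \<le> \<psi> 0"
  proof (rule DERIV_nonpos_imp_nonincreasing[of 0 1])
    fix t :: real assume t: "0 \<le> t" "t \<le> 1"
    have "g\<phi> (x + t *\<^sub>R v) \<bullet> v - g\<phi> x \<bullet> v = (g\<phi> (x + t *\<^sub>R v) - g\<phi> x) \<bullet> v" by (simp add: inner_diff_left)
    also have "\<dots> \<le> norm (g\<phi> (x + t *\<^sub>R v) - g\<phi> x) * norm v" by (rule norm_cauchy_schwarz)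
    also have "\<dots> \<le> (L * norm (t *\<^sub>R v)) * norm v" using lip[of "x + t *\<^sub>R v" x] by (intro mult_right_mono) auto
    also have "\<dots> = L * t * (norm v)\<^sup>2" using t by (simp add: power2_eq_square)
    finally show "\<exists>y. (\<psi> has_real_derivative y) (at t) \<and> y \<le> 0" using d by (intro exI conjI) auto
  qed simp
  then show ?thesis by (simp add: \<psi>_def v_def algebra_simps)
qed

context
  fixes c :: "'a::euclidean_space \<Rightarrow> 'b::euclidean_space" and Dc :: "'a \<Rightarrow> 'a \<Rightarrow> 'b"
    and G C Lc :: real
  assumes c_deriv: "\<And>x. (c has_derivative Dc x) (at x)"
    and c_smooth: "\<And>x y. onorm (\<lambda>v. gradc Dc x v - gradc Dc y v) \<le> Lc * norm (x - y)"
    and gradc_bd: "\<And>x. onorm (gradc Dc x) \<le> G"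
    and c_bd: "\<And>x. norm (c x) \<le> C"
begin

lemma Dc_lin: "linear (Dc x)"
  using has_derivative_bounded_linear[OF c_deriv] bounded_linear.linear by blast

lemma gradc_lin: "linear (gradc Dc x)"
  unfolding gradc_def by (rule adjoint_linear[OF Dc_lin])

lemma gradc_blin: "bounded_linear (gradc Dc x)"
  using gradc_lin linear_conv_bounded_linear by blast

lemma G_nonneg: "G \<ge> 0"
  using onorm_pos_le[OF gradc_blin] gradc_bd order_trans by blast

lemma gradc_norm: "norm (gradc Dc x w) \<le> G * norm w"
proof -
  have "norm (gradc Dc x w) \<le> onorm (gradc Dc x) * norm w" by (rule onorm[OF gradc_blin])
  also have "\<dots> \<le> G * norm w" using gradc_bd by (intro mult_right_mono) auto
  finally show ?thesis .
qed

lemma gradc_inner: "Dc x v \<bullet> w = v \<bullet> gradc Dc x w"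
  unfolding gradc_def using adjoint_works[OF Dc_lin] by simp

lemma Dc_norm: "norm (Dc x v) \<le> G * norm v"
proof -
  have "(norm (Dc x v))\<^sup>2 = Dc x v \<bullet> Dc x v" by (simp add: power2_norm_eq_inner)
  also have "\<dots> = v \<bullet> gradc Dc x (Dc x v)" by (rule gradc_inner)
  also have "\<dots> \<le> norm v * norm (gradc Dc x (Dc x v))" by (rule norm_cauchy_schwarz)
  also have "\<dots> \<le> norm v * (G * norm (Dc x v))" by (intro mult_left_mono gradc_norm) auto
  finally have "norm (Dc x v) * norm (Dc x v) \<le> (G * norm v) * norm (Dc x v)"
    by (simp add: power2_eq_square algebra_simps)
  then show ?thesis using G_nonneg by (cases "norm (Dc x v) = 0") (auto simp: mult_le_cancel_right)
qed

lemma c_lip: "norm (c x - c y) \<le> G * norm (x - y)"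
proof (rule differentiable_bound[of UNIV c Dc G x y])
  show "\<And>x. x \<in> UNIV \<Longrightarrow> (c has_derivative Dc x) (at x within UNIV)" using c_deriv by simp
  show "\<And>x. x \<in> UNIV \<Longrightarrow> onorm (Dc x) \<le> G" by (rule onorm_le, rule Dc_norm)
qed auto

lemma gcc_lip: "norm (gradc Dc x (c x) - gradc Dc y (c y)) \<le> (C * Lc + G\<^sup>2) * norm (x - y)"
proof -
  have eq: "gradc Dc x (c x) - gradc Dc y (c y) = (gradc Dc x (c x) - gradc Dc y (c x)) + gradc Dc y (c x - c y)"
    using linear_diff[OF gradc_lin, of y "c x" "c y"] by simp
  have bl: "bounded_linear (\<lambda>v. gradc Dc x v - gradc Dc y v)"
    using linear_compose_sub[OF gradc_lin gradc_lin] linear_conv_bounded_linear by blast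
  have "norm (gradc Dc x (c x) - gradc Dc y (c x)) \<le> onorm (\<lambda>v. gradc Dc x v - gradc Dc y v) * norm (c x)"
    by (rule onorm[OF bl])
  also have "\<dots> \<le> (Lc * norm (x - y)) * C"
    using c_smooth[of x y] c_bd[of x] onorm_pos_le[OF bl] by (intro mult_mono) auto
  finally have 1: "norm (gradc Dc x (c x) - gradc Dc y (c x)) \<le> C * Lc * norm (x - y)" by (simp add: algebra_simps)
  have "norm (gradc Dc y (c x - c y)) \<le> G * norm (c x - c y)" by (rule gradc_norm)
  also have "\<dots> \<le> G * (G * norm (x - y))"
    using c_lip[of x y] gradc_bd[of y] onorm_pos_le[OF gradc_blin[of y]] by (intro mult_left_mono) auto
  finally have 2: "norm (gradc Dc y (c x - c y)) \<le> G\<^sup>2 * norm (x - y)" by (simp add: power2_eq_square)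
  show ?thesis unfolding eq using norm_triangle_le[OF add_mono[OF 1 2]] by (simp add: algebra_simps)
qed

lemma gcc_cont: "continuous_on S (\<lambda>x. gradc Dc x (c x))"
proof -
  have "(\<bar>C * Lc + G\<^sup>2\<bar>)-lipschitz_on S (\<lambda>x. gradc Dc x (c x))"
  proof (rule lipschitz_onI)
    fix x y assume "x \<in> S" "y \<in> S"
    have "norm (gradc Dc x (c x) - gradc Dc y (c y)) \<le> (C * Lc + G\<^sup>2) * norm (x - y)" by (rule gcc_lip)
    also have "\<dots> \<le> \<bar>C * Lc + G\<^sup>2\<bar> * norm (x - y)" by (intro mult_right_mono) auto
    finally show "dist (gradc Dc x (c x)) (gradc Dc y (c y)) \<le> \<bar>C * Lc + G\<^sup>2\<bar> * dist x y" by (simp add: dist_norm)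
  qed auto
  then show ?thesis by (rule lipschitz_on_continuous_on)
qed

lemma Q_descent:
  fixes f :: "'a \<Rightarrow> real" and gradf :: "'a \<Rightarrow> 'a"
  assumes f_grad: "\<And>x. (f has_derivative (\<lambda>v. gradf x \<bullet> v)) (at x)"
    and f_smooth: "\<And>x y. norm (gradf x - gradf y) \<le> Lf * norm (x - y)"
    and rho: "0 \<le> \<rho>"
  shows "Qpen f c \<rho> y \<le> Qpen f c \<rho> x + gradQ gradf Dc c \<rho> x \<bullet> (y - x)
           + (Lf + \<rho> * (C * Lc + G\<^sup>2)) / 2 * (norm (y - x))\<^sup>2"
proof (rule descent_general[of "Qpen f c \<rho>" "gradQ gradf Dc c \<rho>"])
  fix x
  have "((\<lambda>x. c x \<bullet> c x) has_derivative (\<lambda>v. Dc x v \<bullet> c x + c x \<bullet> Dc x v)) (at x)"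
    using has_derivative_inner[OF c_deriv c_deriv] by (simp add: inner_commute)
  moreover have "c x \<bullet> Dc x v = gradc Dc x (c x) \<bullet> v" for v
    by (metis gradc_inner inner_commute)
  moreover have "Dc x v \<bullet> c x = gradc Dc x (c x) \<bullet> v" for v
    by (metis gradc_inner inner_commute)
  ultimately have "((\<lambda>x. (norm (c x))\<^sup>2) has_derivative (\<lambda>v. 2 * (gradc Dc x (c x) \<bullet> v))) (at x)"
    by (simp add: power2_norm_eq_inner)
  from has_derivative_add[OF f_grad has_derivative_mult_right[OF this, of "\<rho> / 2"]]
  show "(Qpen f c \<rho> has_derivative (\<lambda>v. gradQ gradf Dc c \<rho> x \<bullet> v)) (at x)"
    unfolding Qpen_def[abs_def] gradQ_def by (simp add: inner_add_left)
next
  fix x y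
  have "norm (gradQ gradf Dc c \<rho> x - gradQ gradf Dc c \<rho> y)
      = norm ((gradf x - gradf y) + \<rho> *\<^sub>R (gradc Dc x (c x) - gradc Dc y (c y)))"
    by (simp add: gradQ_def algebra_simps)
  also have "\<dots> \<le> norm (gradf x - gradf y) + \<rho> * norm (gradc Dc x (c x) - gradc Dc y (c y))"
    using norm_triangle_ineq[of "gradf x - gradf y" "\<rho> *\<^sub>R (gradc Dc x (c x) - gradc Dc y (c y))"] rho by simp
  also have "\<dots> \<le> Lf * norm (x - y) + \<rho> * ((C * Lc + G\<^sup>2) * norm (x - y))"
    by (intro add_mono f_smooth mult_left_mono gcc_lip rho)
  finally show "norm (gradQ gradf Dc c \<rho> x - gradQ gradf Dc c \<rho> y) \<le> (Lf + \<rho> * (C * Lc + G\<^sup>2)) * norm (x - y)"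
    by (simp add: algebra_simps)
qed

end


lemma indep_nn:
  assumes psM: "prob_space M" and psS: "prob_space S"
    and ind: "prob_space.indep_var M N Y S X" and dX: "distr M S X = S"
    and phi: "\<phi> \<in> borel_measurable (N \<Otimes>\<^sub>M S)"
  shows "(\<integral>\<^sup>+\<omega>. \<phi> (Y \<omega>, X \<omega>) \<partial>M) = (\<integral>\<^sup>+\<omega>. (\<integral>\<^sup>+s. \<phi> (Y \<omega>, s) \<partial>S) \<partial>M)"
proof -
  interpret M: prob_space M by fact
  interpret S: prob_space S by fact
  have rv: "Y \<in> M \<rightarrow>\<^sub>M N" "X \<in> M \<rightarrow>\<^sub>M S"
    and eq: "distr M N Y \<Otimes>\<^sub>M distr M S X = distr M (N \<Otimes>\<^sub>M S) (\<lambda>x. (Y x, X x))"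
    using ind[unfolded M.indep_var_distribution_eq] by auto
  have YX: "(\<lambda>x. (Y x, X x)) \<in> M \<rightarrow>\<^sub>M N \<Otimes>\<^sub>M S" using rv by (intro measurable_Pair)
  have "(\<integral>\<^sup>+\<omega>. \<phi> (Y \<omega>, X \<omega>) \<partial>M) = integral\<^sup>N (distr M (N \<Otimes>\<^sub>M S) (\<lambda>x. (Y x, X x))) \<phi>"
    by (rule nn_integral_distr[symmetric]) (use YX phi in auto)
  also have "\<dots> = integral\<^sup>N (distr M N Y \<Otimes>\<^sub>M S) \<phi>" using eq dX by simp
  also have "\<dots> = (\<integral>\<^sup>+y. \<integral>\<^sup>+s. \<phi> (y, s) \<partial>S \<partial>(distr M N Y))"
  proof (rule S.nn_integral_fst[symmetric])
    have "sets (distr M N Y \<Otimes>\<^sub>M S) = sets (N \<Otimes>\<^sub>M S)" by (rule sets_pair_measure_cong) auto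
    then show "\<phi> \<in> borel_measurable (distr M N Y \<Otimes>\<^sub>M S)" using phi measurable_cong_sets by blast
  qed
  also have "\<dots> = (\<integral>\<^sup>+\<omega>. (\<integral>\<^sup>+s. \<phi> (Y \<omega>, s) \<partial>S) \<partial>M)"
    by (rule nn_integral_distr) (use rv S.borel_measurable_nn_integral_fst[OF phi] in auto)
  finally show ?thesis .
qed

lemma sq_integrable:
  assumes "f \<in> borel_measurable M" "(\<integral>\<^sup>+x. ennreal ((norm (f x))\<^sup>2) \<partial>M) < \<infinity>"
  shows "integrable M (\<lambda>x. (norm (f x))\<^sup>2)"
  by (rule integrableI_bounded) (use assms in auto)

lemma norm_add_le2: "(norm (a + b))\<^sup>2 \<le> 2 * (norm a)\<^sup>2 + 2 * (norm (b::'a::real_inner))\<^sup>2"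
proof -
  have "(norm (a + b))\<^sup>2 = (norm a)\<^sup>2 + 2 * (a \<bullet> b) + (norm b)\<^sup>2"
    by (simp add: power2_norm_eq_inner inner_add inner_commute)
  moreover have "0 \<le> (norm (a - b))\<^sup>2" by simp
  moreover have "(norm (a - b))\<^sup>2 = (norm a)\<^sup>2 - 2 * (a \<bullet> b) + (norm b)\<^sup>2"
    by (simp add: power2_norm_eq_inner inner_diff inner_commute)
  ultimately show ?thesis by linarith
qed

context
  fixes \<Xi> :: "'s measure" and gradF :: "'a::euclidean_space \<Rightarrow> 's \<Rightarrow> 'a" and gradf :: "'a \<Rightarrow> 'a"
    and \<sigma> Lf :: real
  assumes prob_Xi: "prob_space \<Xi>"
    and A2_int: "\<And>x. integrable \<Xi> (gradF x)"
    and A2_unbiased: "\<And>x. (\<integral>s. gradF x s \<partial>\<Xi>) = gradf x"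
    and A2_var: "\<And>x. (\<integral>\<^sup>+ s. ennreal ((norm (gradF x s - gradf x))\<^sup>2) \<partial>\<Xi>) \<le> ennreal (\<sigma>\<^sup>2)"
    and A4: "\<And>x y. (\<integral>\<^sup>+ s. ennreal ((norm (gradF x s - gradF y s))\<^sup>2) \<partial>\<Xi>)
                   \<le> ennreal (Lf\<^sup>2 * (norm (x - y))\<^sup>2)"
begin

interpretation X: prob_space \<Xi> by (rule prob_Xi)

lemma gradF_meas: "gradF x \<in> borel_measurable \<Xi>"
  using A2_int by auto

lemma sqA_int: "integrable \<Xi> (\<lambda>s. (norm (gradF x s - gradf x))\<^sup>2)"
proof (rule sq_integrable)
  show "(\<integral>\<^sup>+ s. ennreal ((norm (gradF x s - gradf x))\<^sup>2) \<partial>\<Xi>) < \<infinity>"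
    using A2_var[of x] by (rule le_less_trans) simp
qed (use gradF_meas in auto)

lemma sqP_int: "integrable \<Xi> (\<lambda>s. (norm (gradF x s - gradF y s))\<^sup>2)"
proof (rule sq_integrable)
  show "(\<integral>\<^sup>+ s. ennreal ((norm (gradF x s - gradF y s))\<^sup>2) \<partial>\<Xi>) < \<infinity>"
    using A4[of x y] by (rule le_less_trans) simp
qed (use gradF_meas in auto)

lemma intA_le: "(\<integral>s. (norm (gradF x s - gradf x))\<^sup>2 \<partial>\<Xi>) \<le> \<sigma>\<^sup>2"
proof -
  have "ennreal (\<integral>s. (norm (gradF x s - gradf x))\<^sup>2 \<partial>\<Xi>) = (\<integral>\<^sup>+ s. ennreal ((norm (gradF x s - gradf x))\<^sup>2) \<partial>\<Xi>)"
    by (rule nn_integral_eq_integral[symmetric]) (use sqA_int in auto)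
  also have "\<dots> \<le> ennreal (\<sigma>\<^sup>2)" by (rule A2_var)
  finally show ?thesis by (subst (asm) ennreal_le_iff) auto
qed

lemma intP_le: "(\<integral>s. (norm (gradF x s - gradF y s))\<^sup>2 \<partial>\<Xi>) \<le> Lf\<^sup>2 * (norm (x - y))\<^sup>2"
proof -
  have "ennreal (\<integral>s. (norm (gradF x s - gradF y s))\<^sup>2 \<partial>\<Xi>) = (\<integral>\<^sup>+ s. ennreal ((norm (gradF x s - gradF y s))\<^sup>2) \<partial>\<Xi>)"
    by (rule nn_integral_eq_integral[symmetric]) (use sqP_int in auto)
  also have "\<dots> \<le> ennreal (Lf\<^sup>2 * (norm (x - y))\<^sup>2)" by (rule A4)
  finally show ?thesis by (subst (asm) ennreal_le_iff) auto
qed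

lemma inner_main:
  assumes a: "0 \<le> \<alpha>" "\<alpha> \<le> 1"
  shows "(\<integral>\<^sup>+s. ennreal ((norm (gradF x' s + (1 - \<alpha>) *\<^sub>R (d - gradF x s) - gradf x'))\<^sup>2) \<partial>\<Xi>)
     \<le> ennreal ((1 - \<alpha>)\<^sup>2 * (norm (d - gradf x))\<^sup>2 + 2 * \<alpha>\<^sup>2 * \<sigma>\<^sup>2 + 2 * (1 - \<alpha>)\<^sup>2 * Lf\<^sup>2 * (norm (x' - x))\<^sup>2)"
proof -
  define u where "u = (1 - \<alpha>) *\<^sub>R (d - gradf x)"
  define A where "A s = gradF x' s - gradf x'" for s
  define P where "P s = gradF x' s - gradF x s" for s
  define m where "m = gradf x' - gradf x"
  define B where "B s = P s - m" for s
  define V where "V s = \<alpha> *\<^sub>R A s + (1 - \<alpha>) *\<^sub>R B s" for s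
  have eq: "gradF x' s + (1 - \<alpha>) *\<^sub>R (d - gradF x s) - gradf x' = u + V s" for s
    by (simp add: u_def V_def A_def B_def P_def m_def algebra_simps)
  have intA: "integrable \<Xi> A" unfolding A_def using A2_int by auto
  have intP: "integrable \<Xi> P" unfolding P_def using A2_int by auto
  have intB: "integrable \<Xi> B" unfolding B_def using intP by auto
  have intV: "integrable \<Xi> V" unfolding V_def using intA intB by auto
  have iA: "(\<integral>s. A s \<partial>\<Xi>) = 0" unfolding A_def using A2_int A2_unbiased by (simp add: integral_diff X.prob_space)
  have iP: "(\<integral>s. P s \<partial>\<Xi>) = m" unfolding P_def m_def using A2_int A2_unbiased by (simp add: integral_diff X.prob_space)
  have iB: "(\<integral>s. B s \<partial>\<Xi>) = 0" unfolding B_def using intP iP by (simp add: integral_diff X.prob_space)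
  have iV: "(\<integral>s. V s \<partial>\<Xi>) = 0" unfolding V_def using intA intB iA iB by simp
  have sqA: "integrable \<Xi> (\<lambda>s. (norm (A s))\<^sup>2)" unfolding A_def by (rule sqA_int)
  have sqP: "integrable \<Xi> (\<lambda>s. (norm (P s))\<^sup>2)" unfolding P_def by (rule sqP_int)
  have Bexp: "(norm (B s))\<^sup>2 = (norm (P s))\<^sup>2 - 2 * (P s \<bullet> m) + (norm m)\<^sup>2" for s
    unfolding B_def by (simp add: power2_norm_eq_inner inner_diff inner_commute)
  have sqB: "integrable \<Xi> (\<lambda>s. (norm (B s))\<^sup>2)" unfolding Bexp using sqP intP by auto
  have iBsq: "(\<integral>s. (norm (B s))\<^sup>2 \<partial>\<Xi>) \<le> Lf\<^sup>2 * (norm (x' - x))\<^sup>2"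
  proof -
    have "(\<integral>s. (norm (B s))\<^sup>2 \<partial>\<Xi>) = (\<integral>s. (norm (P s))\<^sup>2 \<partial>\<Xi>) - 2 * (m \<bullet> m) + (norm m)\<^sup>2"
      unfolding Bexp using sqP intP iP by (simp add: integral_diff inner_commute X.prob_space)
    also have "\<dots> = (\<integral>s. (norm (P s))\<^sup>2 \<partial>\<Xi>) - (norm m)\<^sup>2" by (simp add: power2_norm_eq_inner)
    also have "\<dots> \<le> (\<integral>s. (norm (P s))\<^sup>2 \<partial>\<Xi>)" by simp
    also have "\<dots> \<le> Lf\<^sup>2 * (norm (x' - x))\<^sup>2" unfolding P_def by (rule intP_le)
    finally show ?thesis .
  qed
  have Vbd: "(norm (V s))\<^sup>2 \<le> 2 * \<alpha>\<^sup>2 * (norm (A s))\<^sup>2 + 2 * (1 - \<alpha>)\<^sup>2 * (norm (B s))\<^sup>2" for s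
    using norm_add_le2[of "\<alpha> *\<^sub>R A s" "(1 - \<alpha>) *\<^sub>R B s"] a
    by (simp add: V_def power_mult_distrib)
  have measV: "V \<in> borel_measurable \<Xi>" using intV by auto
  have sqV: "integrable \<Xi> (\<lambda>s. (norm (V s))\<^sup>2)"
    by (rule Bochner_Integration.integrable_bound[of _ "\<lambda>s. 2 * \<alpha>\<^sup>2 * (norm (A s))\<^sup>2 + 2 * (1 - \<alpha>)\<^sup>2 * (norm (B s))\<^sup>2"])
       (use sqA sqB measV Vbd in auto)
  have iVsq: "(\<integral>s. (norm (V s))\<^sup>2 \<partial>\<Xi>) \<le> 2 * \<alpha>\<^sup>2 * \<sigma>\<^sup>2 + 2 * (1 - \<alpha>)\<^sup>2 * Lf\<^sup>2 * (norm (x' - x))\<^sup>2"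
  proof -
    have "(\<integral>s. (norm (V s))\<^sup>2 \<partial>\<Xi>) \<le> (\<integral>s. 2 * \<alpha>\<^sup>2 * (norm (A s))\<^sup>2 + 2 * (1 - \<alpha>)\<^sup>2 * (norm (B s))\<^sup>2 \<partial>\<Xi>)"
      by (rule integral_mono) (use sqV sqA sqB Vbd in auto)
    also have "\<dots> = 2 * \<alpha>\<^sup>2 * (\<integral>s. (norm (A s))\<^sup>2 \<partial>\<Xi>) + 2 * (1 - \<alpha>)\<^sup>2 * (\<integral>s. (norm (B s))\<^sup>2 \<partial>\<Xi>)"
      using sqA sqB by simp
    also have "\<dots> \<le> 2 * \<alpha>\<^sup>2 * \<sigma>\<^sup>2 + 2 * (1 - \<alpha>)\<^sup>2 * (Lf\<^sup>2 * (norm (x' - x))\<^sup>2)"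
      using intA_le[of x'] iBsq unfolding A_def by (intro add_mono mult_left_mono) auto
    finally show ?thesis by simp
  qed
  have expand: "(norm (u + V s))\<^sup>2 = (norm u)\<^sup>2 + 2 * (u \<bullet> V s) + (norm (V s))\<^sup>2" for s
    by (simp add: power2_norm_eq_inner inner_add inner_commute)
  have sqT: "integrable \<Xi> (\<lambda>s. (norm (u + V s))\<^sup>2)" unfolding expand using sqV intV by auto
  have iT: "(\<integral>s. (norm (u + V s))\<^sup>2 \<partial>\<Xi>) = (norm u)\<^sup>2 + (\<integral>s. (norm (V s))\<^sup>2 \<partial>\<Xi>)"
    unfolding expand using sqV intV iV by (simp add: X.prob_space)
  have "(\<integral>\<^sup>+s. ennreal ((norm (gradF x' s + (1 - \<alpha>) *\<^sub>R (d - gradF x s) - gradf x'))\<^sup>2) \<partial>\<Xi>)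
      = (\<integral>\<^sup>+s. ennreal ((norm (u + V s))\<^sup>2) \<partial>\<Xi>)" unfolding eq ..
  also have "\<dots> = ennreal (\<integral>s. (norm (u + V s))\<^sup>2 \<partial>\<Xi>)"
    by (rule nn_integral_eq_integral) (use sqT in auto)
  also have "\<dots> \<le> ennreal ((1 - \<alpha>)\<^sup>2 * (norm (d - gradf x))\<^sup>2 + 2 * \<alpha>\<^sup>2 * \<sigma>\<^sup>2 + 2 * (1 - \<alpha>)\<^sup>2 * Lf\<^sup>2 * (norm (x' - x))\<^sup>2)"
    using iT iVsq a by (intro ennreal_leI) (simp add: u_def power_mult_distrib)
  finally show ?thesis .
qed

end


locale setting =
  fixes M :: "'m measure" and \<Xi> :: "'s measure"
    and gradF :: "'a::euclidean_space \<Rightarrow> 's \<Rightarrow> 'a"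
    and f :: "'a \<Rightarrow> real" and gradf :: "'a \<Rightarrow> 'a"
    and c :: "'a \<Rightarrow> 'b::euclidean_space" and Dc :: "'a \<Rightarrow> 'a \<Rightarrow> 'b"
    and h g :: "'a \<Rightarrow> real"
    and Lf Lc C G \<sigma> :: real
    and b0 :: nat and Xs :: "nat + nat \<Rightarrow> 'm \<Rightarrow> 's"
    and x z d :: "nat \<Rightarrow> 'm \<Rightarrow> 'a" and x0 :: 'a
    and \<alpha> \<mu> \<rho> :: "nat \<Rightarrow> real" and \<beta> \<mu>bar :: real
  assumes prob_Xi: "prob_space \<Xi>"
    and gradF_meas: "(\<lambda>(x, s). gradF x s) \<in> borel_measurable (borel \<Otimes>\<^sub>M \<Xi>)"
    and A2_int: "\<And>x. integrable \<Xi> (gradF x)"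
    and A2_unbiased: "\<And>x. (\<integral>s. gradF x s \<partial>\<Xi>) = gradf x"
    and A2_var: "\<And>x. (\<integral>\<^sup>+ s. ennreal ((norm (gradF x s - gradf x))\<^sup>2) \<partial>\<Xi>) \<le> ennreal (\<sigma>\<^sup>2)"
    and A4: "\<And>x y. (\<integral>\<^sup>+ s. ennreal ((norm (gradF x s - gradF y s))\<^sup>2) \<partial>\<Xi>)
                   \<le> ennreal (Lf\<^sup>2 * (norm (x - y))\<^sup>2)"
    and f_grad: "\<And>x. (f has_derivative (\<lambda>v. gradf x \<bullet> v)) (at x)"
    and f_smooth: "\<And>x y. norm (gradf x - gradf y) \<le> Lf * norm (x - y)"
    and c_deriv: "\<And>x. (c has_derivative Dc x) (at x)"
    and c_smooth: "\<And>x y. onorm (\<lambda>v. gradc Dc x v - gradc Dc y v) \<le> Lc * norm (x - y)"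
    and h_convex: "convex_on UNIV h" and g_convex: "convex_on UNIV g"
    and C_pos: "C > 0" and G_pos: "G > 0"
    and gradf_bd: "\<And>x. norm (gradf x) \<le> G"
    and h_subgrad_bd: "\<And>x v. v \<in> subdiff h x \<Longrightarrow> norm v \<le> G"
    and g_subgrad_bd: "\<And>x v. v \<in> subdiff g x \<Longrightarrow> norm v \<le> G"
    and gradc_bd: "\<And>x. onorm (gradc Dc x) \<le> G"
    and c_bd: "\<And>x. norm (c x) \<le> C"
    and Fstar_finite: "bdd_below (range (\<lambda>x. f x + h x - g x))"
    and rho0_pos: "\<rho> 0 > 0"
    and mu_pos: "\<And>k. \<mu> k > 0"
    and step: "\<And>k. \<mu> k * (\<rho> k * (Lf / \<rho> 0 + G\<^sup>2 + C * Lc)) \<le> 1 / 4"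
    and mu_mono: "\<And>k. \<mu> (Suc k) \<le> \<mu> k"
    and rho_mono: "\<And>k. \<rho> k \<le> \<rho> (Suc k)"
    and beta: "0 < \<beta>" "\<beta> \<le> 1"
    and alpha: "\<And>k. 0 < 32 * (\<mu> k)\<^sup>2 * Lf\<^sup>2" "\<And>k. 32 * (\<mu> k)\<^sup>2 * Lf\<^sup>2 \<le> \<alpha> k" "\<And>k. \<alpha> k \<le> 1"
    and mubar: "\<And>k. \<mu> k \<le> \<mu>bar"
    and prob_M: "prob_space M"
    and b0_pos: "b0 \<ge> 1"
    and Xs_indep: "prob_space.indep_vars M (\<lambda>_. \<Xi>) Xs (Inl ` {..<b0} \<union> Inr ` {1..})"
    and Xs_distr: "\<And>i. i \<in> Inl ` {..<b0} \<union> Inr ` {1..} \<Longrightarrow> distr M \<Xi> (Xs i) = \<Xi>"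
    and x_0: "\<And>\<omega>. x 0 \<omega> = x0" and z_0: "\<And>\<omega>. z 0 \<omega> = x0"
    and d_0: "\<And>\<omega>. d 0 \<omega> = (1 / real b0) *\<^sub>R (\<Sum>j<b0. gradF x0 (Xs (Inl j) \<omega>))"
    and d_Suc: "\<And>k \<omega>. d (Suc k) \<omega> = gradF (x (Suc k) \<omega>) (Xs (Inr (Suc k)) \<omega>)
                  + (1 - \<alpha> k) *\<^sub>R (d k \<omega> - gradF (x k \<omega>) (Xs (Inr (Suc k)) \<omega>))"
    and x_Suc: "\<And>k \<omega>. x (Suc k) \<omega> = prox (\<mu> k) h
                  (z k \<omega> - \<mu> k *\<^sub>R (d k \<omega> + \<rho> k *\<^sub>R gradc Dc (x k \<omega>) (c (x k \<omega>))))"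
    and z_Suc: "\<And>k \<omega>. z (Suc k) \<omega> = z k \<omega> - \<beta> *\<^sub>R (prox (\<mu> k) g (z k \<omega>) - x (Suc k) \<omega>)"

sublocale setting \<subseteq> MP: prob_space M by (rule prob_M)
sublocale setting \<subseteq> XP: prob_space \<Xi> by (rule prob_Xi)

context setting
begin

lemma Lf_nonneg: "Lf \<ge> 0"
proof -
  obtain b :: 'a where b: "b \<in> Basis" using nonempty_Basis by blast
  have "0 \<le> norm (gradf 0 - gradf b)" by simp
  also have "\<dots> \<le> Lf * norm (0 - b)" by (rule f_smooth)
  finally show ?thesis using b by simp
qed

lemma rho_ge: "\<rho> 0 \<le> \<rho> k"
proof (induction k)
  case (Suc k) then show ?case using rho_mono[of k] by linarith
qed simp

lemma rho_pos: "\<rho> k > 0" using rho_ge[of k] rho0_pos by simp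

lemma mu_le0: "\<mu> k \<le> \<mu> 0"
proof (induction k)
  case (Suc k) then show ?case using mu_mono[of k] by linarith
qed simp

lemma alpha_pos: "\<alpha> k > 0" using less_le_trans[OF alpha(1)[of k] alpha(2)[of k]] .

lemma mubar_nonneg: "\<mu>bar \<ge> 0" using mubar[of 0] mu_pos[of 0] by simp

lemma Lq_le: "\<mu> k * (Lf + \<rho> k * (C * Lc + G\<^sup>2)) \<le> 1 / 4"
proof -
  have r: "1 \<le> \<rho> k / \<rho> 0" using rho_ge[of k] rho0_pos by (simp add: le_divide_eq_1_pos)
  have "Lf * 1 \<le> Lf * (\<rho> k / \<rho> 0)" by (rule mult_left_mono[OF r Lf_nonneg])
  moreover have "\<rho> k * (Lf / \<rho> 0) = Lf * (\<rho> k / \<rho> 0)" by simp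
  moreover have "\<rho> k * (Lf / \<rho> 0 + G\<^sup>2 + C * Lc) = \<rho> k * (Lf / \<rho> 0) + \<rho> k * (C * Lc + G\<^sup>2)"
    by (simp add: distrib_left)
  ultimately have "Lf + \<rho> k * (C * Lc + G\<^sup>2) \<le> \<rho> k * (Lf / \<rho> 0 + G\<^sup>2 + C * Lc)" by linarith
  then have "\<mu> k * (Lf + \<rho> k * (C * Lc + G\<^sup>2)) \<le> \<mu> k * (\<rho> k * (Lf / \<rho> 0 + G\<^sup>2 + C * Lc))"
    using mu_pos[of k] by (intro mult_left_mono) auto
  then show ?thesis using step[of k] by linarith
qed

lemma gradf_cont: "continuous_on S gradf"
proof -
  have "Lf-lipschitz_on S gradf"
    by (rule lipschitz_onI) (use f_smooth Lf_nonneg in \<open>auto simp: dist_norm\<close>)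
  then show ?thesis by (rule lipschitz_on_continuous_on)
qed

lemma prox_bd:
  fixes \<phi> :: "'a \<Rightarrow> real"
  assumes cvx: "convex_on UNIV \<phi>" and bd: "\<And>x v. v \<in> subdiff \<phi> x \<Longrightarrow> norm v \<le> G" and m: "m > 0"
  shows "norm (prox m \<phi> u - u) \<le> m * G"
proof -
  have n: "norm ((1 / m) *\<^sub>R (u - prox m \<phi> u)) \<le> G" by (rule bd, rule prox_subdiff[OF cvx m])
  have "\<bar>1 / m\<bar> * norm (u - prox m \<phi> u) \<le> G" using n by (simp only: norm_scaleR)
  moreover have "\<bar>1 / m\<bar> = 1 / m" using m by simp
  ultimately have "norm (u - prox m \<phi> u) / m \<le> G" by simp
  then have "norm (u - prox m \<phi> u) \<le> m * G" using m by (simp add: pos_divide_le_eq mult.commute)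
  then show ?thesis by (simp add: norm_minus_commute)
qed

definition Xup :: "nat \<Rightarrow> 'a \<times> 'a \<times> 'a \<Rightarrow> 'a" where
  "Xup k p = prox (\<mu> k) h (fst (snd p) - \<mu> k *\<^sub>R (snd (snd p) + \<rho> k *\<^sub>R gradc Dc (fst p) (c (fst p))))"

definition Zup :: "nat \<Rightarrow> 'a \<times> 'a \<times> 'a \<Rightarrow> 'a" where
  "Zup k p = fst (snd p) - \<beta> *\<^sub>R (prox (\<mu> k) g (fst (snd p)) - Xup k p)"

lemma x_Suc': "x (Suc k) \<omega> = Xup k (x k \<omega>, z k \<omega>, d k \<omega>)"
  by (simp add: x_Suc Xup_def)

lemma z_Suc': "z (Suc k) \<omega> = Zup k (x k \<omega>, z k \<omega>, d k \<omega>)"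
  by (simp add: z_Suc Zup_def x_Suc')

lemma cont_Xup: "continuous_on UNIV (Xup k)"
proof -
  have gc: "continuous_on UNIV (\<lambda>p::'a\<times>'a\<times>'a. gradc Dc (fst p) (c (fst p)))"
    by (rule continuous_on_compose2[OF gcc_cont[OF c_deriv c_smooth gradc_bd c_bd] continuous_on_fst]) auto
  have "continuous_on UNIV (\<lambda>p::'a\<times>'a\<times>'a. fst (snd p) - \<mu> k *\<^sub>R (snd (snd p) + \<rho> k *\<^sub>R gradc Dc (fst p) (c (fst p))))"
    by (intro continuous_intros gc)
  then show ?thesis unfolding Xup_def[abs_def]
    by (rule continuous_on_compose2[OF prox_cont[OF h_convex mu_pos]]) auto
qed

lemma cont_Zup: "continuous_on UNIV (Zup k)"
proof -
  have "continuous_on UNIV (\<lambda>p::'a\<times>'a\<times>'a. prox (\<mu> k) g (fst (snd p)))"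
    by (rule continuous_on_compose2[OF prox_cont[OF g_convex mu_pos]]) (auto intro!: continuous_intros)
  then show ?thesis unfolding Zup_def[abs_def]
    by (intro continuous_intros cont_Xup)
qed

lemma gradF_comp[measurable (raw)]:
  assumes A: "A \<in> borel_measurable N" and B: "B \<in> N \<rightarrow>\<^sub>M \<Xi>"
  shows "(\<lambda>t. gradF (A t) (B t)) \<in> borel_measurable N"
proof -
  have gm: "(\<lambda>p. gradF (fst p) (snd p)) \<in> borel_measurable (borel \<Otimes>\<^sub>M \<Xi>)"
    using gradF_meas by (simp add: case_prod_beta')
  show ?thesis using measurable_compose[OF measurable_Pair[OF A B] gm] by simp
qed

lemma meas_triple:
  fixes a b e :: "'q \<Rightarrow> 'a"
  assumes "a \<in> borel_measurable N" "b \<in> borel_measurable N" "e \<in> borel_measurable N"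
  shows "(\<lambda>t. (a t, b t, e t)) \<in> N \<rightarrow>\<^sub>M (borel :: ('a \<times> 'a \<times> 'a) measure)"
proof -
  have "(\<lambda>t. (b t, e t)) \<in> N \<rightarrow>\<^sub>M (borel \<Otimes>\<^sub>M borel)" using assms by (intro measurable_Pair)
  then have 1: "(\<lambda>t. (b t, e t)) \<in> N \<rightarrow>\<^sub>M (borel :: ('a \<times> 'a) measure)" by (simp add: borel_prod)
  have "(\<lambda>t. (a t, b t, e t)) \<in> N \<rightarrow>\<^sub>M (borel \<Otimes>\<^sub>M (borel :: ('a \<times> 'a) measure))"
    using assms(1) 1 by (intro measurable_Pair)
  then show ?thesis by (simp add: borel_prod)
qed

lemma meas_cont_comp:
  assumes "continuous_on UNIV F" "A \<in> borel_measurable N"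
  shows "(\<lambda>t. F (A t)) \<in> borel_measurable N"
  using borel_measurable_continuous_on[OF assms] .

definition II :: "(nat + nat) set" where "II = Inl ` {..<b0} \<union> Inr ` {1..}"
definition KK :: "nat \<Rightarrow> (nat + nat) set" where "KK k = Inl ` {..<b0} \<union> Inr ` {1..k}"
definition TT :: "nat \<Rightarrow> 'm \<Rightarrow> (nat + nat \<Rightarrow> 's)" where "TT k \<omega> = restrict (\<lambda>i. Xs i \<omega>) (KK k)"

lemma KK_sub: "KK k \<subseteq> II" by (auto simp: KK_def II_def)
lemma KK_mono: "KK k \<subseteq> KK (Suc k)" by (auto simp: KK_def)
lemma Inr_in: "Inr (Suc k) \<in> KK (Suc k)" by (auto simp: KK_def)
lemma Inr_notin: "Inr (Suc k) \<notin> KK k" by (auto simp: KK_def)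
lemma Inr_II: "Inr (Suc k) \<in> II" by (auto simp: II_def)

lemma Xs_indep': "MP.indep_vars (\<lambda>_. \<Xi>) Xs II" using Xs_indep by (simp add: II_def)

lemma Xs_meas: "i \<in> II \<Longrightarrow> Xs i \<in> M \<rightarrow>\<^sub>M \<Xi>"
  using Xs_indep' unfolding MP.indep_vars_def by auto

lemma TT_meas: "TT k \<in> M \<rightarrow>\<^sub>M PiM (KK k) (\<lambda>_. \<Xi>)"
  unfolding TT_def[abs_def] by (rule measurable_restrict) (use Xs_meas KK_sub in auto)

lemma rep_exists:
  "\<exists>\<Phi>. \<Phi> \<in> PiM (KK k) (\<lambda>_. \<Xi>) \<rightarrow>\<^sub>M (borel :: ('a \<times> 'a \<times> 'a) measure) \<and> (\<forall>\<omega>. (x k \<omega>, z k \<omega>, d k \<omega>) = \<Phi> (TT k \<omega>))"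
proof (induction k)
  case 0
  define \<Phi> where "\<Phi> t = (x0, x0, (1 / real b0) *\<^sub>R (\<Sum>j<b0. gradF x0 (t (Inl j))))" for t :: "nat + nat \<Rightarrow> 's"
  have "\<Phi> \<in> PiM (KK 0) (\<lambda>_. \<Xi>) \<rightarrow>\<^sub>M (borel :: ('a \<times> 'a \<times> 'a) measure)"
    unfolding \<Phi>_def
  proof (intro meas_triple measurable_const borel_measurable_scaleR borel_measurable_sum gradF_comp)
    fix j assume "j \<in> {..<b0}"
    then show "(\<lambda>t. t (Inl j)) \<in> PiM (KK 0) (\<lambda>_. \<Xi>) \<rightarrow>\<^sub>M \<Xi>"
      by (intro measurable_component_singleton) (auto simp: KK_def)
  qed auto
  moreover have "(x 0 \<omega>, z 0 \<omega>, d 0 \<omega>) = \<Phi> (TT 0 \<omega>)" for \<omega>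
    by (simp add: \<Phi>_def x_0 z_0 d_0 TT_def KK_def)
  ultimately show ?case by blast
next
  case (Suc k)
  then obtain \<Phi> where \<Phi>: "\<Phi> \<in> PiM (KK k) (\<lambda>_. \<Xi>) \<rightarrow>\<^sub>M (borel :: ('a \<times> 'a \<times> 'a) measure)"
    "\<And>\<omega>. (x k \<omega>, z k \<omega>, d k \<omega>) = \<Phi> (TT k \<omega>)" by blast
  define P where "P t = \<Phi> (restrict t (KK k))" for t :: "nat + nat \<Rightarrow> 's"
  define \<Psi> where "\<Psi> t = (Xup k (P t), Zup k (P t),
      gradF (Xup k (P t)) (t (Inr (Suc k))) + (1 - \<alpha> k) *\<^sub>R (snd (snd (P t)) - gradF (fst (P t)) (t (Inr (Suc k)))))"
    for t
  have Pm: "P \<in> PiM (KK (Suc k)) (\<lambda>_. \<Xi>) \<rightarrow>\<^sub>M borel"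
    unfolding P_def by (rule measurable_compose[OF measurable_restrict_subset[OF KK_mono] \<Phi>(1)])
  have comp: "(\<lambda>t. t (Inr (Suc k))) \<in> PiM (KK (Suc k)) (\<lambda>_. \<Xi>) \<rightarrow>\<^sub>M \<Xi>"
    by (intro measurable_component_singleton Inr_in)
  have m1: "(\<lambda>t. Xup k (P t)) \<in> borel_measurable (PiM (KK (Suc k)) (\<lambda>_. \<Xi>))"
    by (rule meas_cont_comp[OF cont_Xup Pm])
  have m2: "(\<lambda>t. Zup k (P t)) \<in> borel_measurable (PiM (KK (Suc k)) (\<lambda>_. \<Xi>))"
    by (rule meas_cont_comp[OF cont_Zup Pm])
  have m3: "(\<lambda>t. fst (P t)) \<in> borel_measurable (PiM (KK (Suc k)) (\<lambda>_. \<Xi>))"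
    by (rule meas_cont_comp[OF continuous_on_fst[OF continuous_on_id] Pm])
  have m4: "(\<lambda>t. snd (snd (P t))) \<in> borel_measurable (PiM (KK (Suc k)) (\<lambda>_. \<Xi>))"
    by (rule meas_cont_comp[OF _ Pm]) (intro continuous_intros)
  have "\<Psi> \<in> PiM (KK (Suc k)) (\<lambda>_. \<Xi>) \<rightarrow>\<^sub>M (borel :: ('a \<times> 'a \<times> 'a) measure)"
    unfolding \<Psi>_def
    by (intro meas_triple m1 m2 borel_measurable_add borel_measurable_scaleR borel_measurable_diff
        gradF_comp comp m3 m4 measurable_const) simp_all
  moreover have "(x (Suc k) \<omega>, z (Suc k) \<omega>, d (Suc k) \<omega>) = \<Psi> (TT (Suc k) \<omega>)" for \<omega>
  proof -
    have r: "restrict (TT (Suc k) \<omega>) (KK k) = TT k \<omega>"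
      using KK_mono by (auto simp: TT_def restrict_def fun_eq_iff)
    have "P (TT (Suc k) \<omega>) = (x k \<omega>, z k \<omega>, d k \<omega>)" unfolding P_def r \<Phi>(2) ..
    moreover have "TT (Suc k) \<omega> (Inr (Suc k)) = Xs (Inr (Suc k)) \<omega>" using Inr_in by (simp add: TT_def)
    ultimately show ?thesis by (simp add: \<Psi>_def x_Suc' z_Suc' d_Suc)
  qed
  ultimately show ?case by blast
qed

definition Phi :: "nat \<Rightarrow> (nat + nat \<Rightarrow> 's) \<Rightarrow> 'a \<times> 'a \<times> 'a" where
  "Phi k = (SOME \<Phi>. \<Phi> \<in> PiM (KK k) (\<lambda>_. \<Xi>) \<rightarrow>\<^sub>M (borel :: ('a \<times> 'a \<times> 'a) measure) \<and> (\<forall>\<omega>. (x k \<omega>, z k \<omega>, d k \<omega>) = \<Phi> (TT k \<omega>)))"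

lemma Phi: "Phi k \<in> PiM (KK k) (\<lambda>_. \<Xi>) \<rightarrow>\<^sub>M (borel :: ('a \<times> 'a \<times> 'a) measure)"
  "(x k \<omega>, z k \<omega>, d k \<omega>) = Phi k (TT k \<omega>)"
  using someI_ex[OF rep_exists[of k]] unfolding Phi_def[symmetric] by auto

lemma Y_meas: "(\<lambda>\<omega>. (x k \<omega>, z k \<omega>, d k \<omega>)) \<in> M \<rightarrow>\<^sub>M (borel :: ('a \<times> 'a \<times> 'a) measure)"
  unfolding Phi(2) by (rule measurable_compose[OF TT_meas Phi(1)])

lemma x_meas: "x k \<in> borel_measurable M"
  using meas_cont_comp[OF continuous_on_fst[OF continuous_on_id] Y_meas[of k]] by simp

lemma z_meas: "z k \<in> borel_measurable M"
proof -
  have "continuous_on UNIV (\<lambda>p::'a\<times>'a\<times>'a. fst (snd p))" by (intro continuous_intros)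
  from meas_cont_comp[OF this Y_meas[of k]] show ?thesis by simp
qed

lemma d_meas: "d k \<in> borel_measurable M"
proof -
  have "continuous_on UNIV (\<lambda>p::'a\<times>'a\<times>'a. snd (snd p))" by (intro continuous_intros)
  from meas_cont_comp[OF this Y_meas[of k]] show ?thesis by simp
qed

lemma gradfx_meas: "(\<lambda>\<omega>. gradf (x k \<omega>)) \<in> borel_measurable M"
  by (rule meas_cont_comp[OF gradf_cont x_meas])

lemma indep_nn2:
  assumes ind: "MP.indep_var N1 Y1 N2 Y2"
    and psi: "\<psi> \<in> borel_measurable (N1 \<Otimes>\<^sub>M N2)"
  shows "(\<integral>\<^sup>+\<omega>. \<psi> (Y1 \<omega>, Y2 \<omega>) \<partial>M) = (\<integral>\<^sup>+\<omega>. (\<integral>\<^sup>+t. \<psi> (Y1 \<omega>, t) \<partial>(distr M N2 Y2)) \<partial>M)"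
proof -
  have rv: "Y1 \<in> M \<rightarrow>\<^sub>M N1" "Y2 \<in> M \<rightarrow>\<^sub>M N2"
    and eq: "distr M N1 Y1 \<Otimes>\<^sub>M distr M N2 Y2 = distr M (N1 \<Otimes>\<^sub>M N2) (\<lambda>x. (Y1 x, Y2 x))"
    using ind[unfolded MP.indep_var_distribution_eq] by auto
  interpret S: prob_space "distr M N2 Y2" by (rule MP.prob_space_distr[OF rv(2)])
  have YX: "(\<lambda>x. (Y1 x, Y2 x)) \<in> M \<rightarrow>\<^sub>M N1 \<Otimes>\<^sub>M N2" using rv by (intro measurable_Pair)
  have psi': "\<psi> \<in> borel_measurable (distr M N1 Y1 \<Otimes>\<^sub>M distr M N2 Y2)"
  proof -
    have "sets (distr M N1 Y1 \<Otimes>\<^sub>M distr M N2 Y2) = sets (N1 \<Otimes>\<^sub>M N2)" by (rule sets_pair_measure_cong) auto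
    then show ?thesis using psi measurable_cong_sets by blast
  qed
  have "(\<integral>\<^sup>+\<omega>. \<psi> (Y1 \<omega>, Y2 \<omega>) \<partial>M) = integral\<^sup>N (distr M (N1 \<Otimes>\<^sub>M N2) (\<lambda>x. (Y1 x, Y2 x))) \<psi>"
    by (rule nn_integral_distr[symmetric]) (use YX psi in auto)
  also have "\<dots> = integral\<^sup>N (distr M N1 Y1 \<Otimes>\<^sub>M distr M N2 Y2) \<psi>" using eq by simp
  also have "\<dots> = (\<integral>\<^sup>+y. \<integral>\<^sup>+t. \<psi> (y, t) \<partial>(distr M N2 Y2) \<partial>(distr M N1 Y1))"
    by (rule S.nn_integral_fst[symmetric]) (rule psi')
  also have "\<dots> = (\<integral>\<^sup>+\<omega>. (\<integral>\<^sup>+t. \<psi> (Y1 \<omega>, t) \<partial>(distr M N2 Y2)) \<partial>M)"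
  proof (rule nn_integral_distr[OF rv(1)])
    have "(\<lambda>y. \<integral>\<^sup>+t. \<psi> (y, t) \<partial>(distr M N2 Y2)) \<in> borel_measurable (distr M N1 Y1)"
      by (rule S.borel_measurable_nn_integral_fst[OF psi'])
    then show "(\<lambda>y. \<integral>\<^sup>+t. \<psi> (y, t) \<partial>(distr M N2 Y2)) \<in> borel_measurable (distr M N1 Y1)" .
  qed
  finally show ?thesis .
qed

lemma indep_step:
  assumes phi: "\<phi> \<in> borel_measurable ((borel :: ('a \<times> 'a \<times> 'a) measure) \<Otimes>\<^sub>M \<Xi>)"
  shows "(\<integral>\<^sup>+\<omega>. \<phi> ((x k \<omega>, z k \<omega>, d k \<omega>), Xs (Inr (Suc k)) \<omega>) \<partial>M)
       = (\<integral>\<^sup>+\<omega>. (\<integral>\<^sup>+s. \<phi> ((x k \<omega>, z k \<omega>, d k \<omega>), s) \<partial>\<Xi>) \<partial>M)"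
proof -
  let ?i = "Inr (Suc k) :: nat + nat"
  let ?Y2 = "\<lambda>\<omega>. restrict (\<lambda>j. Xs j \<omega>) {?i}"
  let ?B = "PiM {?i} (\<lambda>_. \<Xi>)"
  let ?A = "PiM (KK k) (\<lambda>_. \<Xi>)"
  have Xi: "Xs ?i \<in> M \<rightarrow>\<^sub>M \<Xi>" by (rule Xs_meas[OF Inr_II])
  have dXi: "distr M \<Xi> (Xs ?i) = \<Xi>" by (rule Xs_distr) (use Inr_II[of k] in \<open>simp only: II_def\<close>)
  have ind: "MP.indep_var ?A (TT k) ?B ?Y2"
    unfolding TT_def[abs_def]
  proof (rule MP.indep_var_restrict[OF Xs_indep'])
    show "KK k \<inter> {?i} = {}" using Inr_notin[of k] by blast
    show "KK k \<subseteq> II" by (rule KK_sub)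
    show "{?i} \<subseteq> II" using Inr_II[of k] by blast
  qed
  have Y2m: "?Y2 \<in> M \<rightarrow>\<^sub>M ?B"
    by (rule measurable_restrict) (use Xi in blast)
  have ci: "(\<lambda>t. t ?i) \<in> ?B \<rightarrow>\<^sub>M \<Xi>" by (rule measurable_component_singleton) blast
  have pm: "(\<lambda>p. (Phi k (fst p), snd p ?i)) \<in> (?A \<Otimes>\<^sub>M ?B) \<rightarrow>\<^sub>M (borel \<Otimes>\<^sub>M \<Xi>)"
    by (intro measurable_Pair measurable_compose[OF measurable_fst Phi(1)] measurable_compose[OF measurable_snd ci])
  have psim: "(\<lambda>p. \<phi> (Phi k (fst p), snd p ?i)) \<in> borel_measurable (?A \<Otimes>\<^sub>M ?B)"
    by (rule measurable_compose[OF pm phi])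
  have phic: "(\<lambda>s. \<phi> (q, s)) \<in> borel_measurable \<Xi>" for q
    by (rule measurable_compose[OF measurable_Pair[OF measurable_const[of q] measurable_ident_sets[OF refl]] phi]) simp
  have "(\<integral>\<^sup>+\<omega>. \<phi> ((x k \<omega>, z k \<omega>, d k \<omega>), Xs ?i \<omega>) \<partial>M)
      = (\<integral>\<^sup>+\<omega>. (\<lambda>p. \<phi> (Phi k (fst p), snd p ?i)) (TT k \<omega>, ?Y2 \<omega>) \<partial>M)"
  proof (rule nn_integral_cong)
    fix \<omega>
    have e1: "Phi k (TT k \<omega>) = (x k \<omega>, z k \<omega>, d k \<omega>)" by (rule Phi(2)[symmetric])
    have e2: "?Y2 \<omega> ?i = Xs ?i \<omega>" by (rule restrict_apply') blast
    show "\<phi> ((x k \<omega>, z k \<omega>, d k \<omega>), Xs ?i \<omega>) = (\<lambda>p. \<phi> (Phi k (fst p), snd p ?i)) (TT k \<omega>, ?Y2 \<omega>)"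
      by (simp only: fst_conv snd_conv e1 e2)
  qed
  also have "\<dots> = (\<integral>\<^sup>+\<omega>. (\<integral>\<^sup>+t. (\<lambda>p. \<phi> (Phi k (fst p), snd p ?i)) (TT k \<omega>, t) \<partial>(distr M ?B ?Y2)) \<partial>M)"
    by (rule indep_nn2[OF ind psim])
  also have "\<dots> = (\<integral>\<^sup>+\<omega>. (\<integral>\<^sup>+s. \<phi> ((x k \<omega>, z k \<omega>, d k \<omega>), s) \<partial>\<Xi>) \<partial>M)"
  proof (rule nn_integral_cong)
    fix \<omega>
    have e1: "Phi k (TT k \<omega>) = (x k \<omega>, z k \<omega>, d k \<omega>)" by (rule Phi(2)[symmetric])
    have "(\<integral>\<^sup>+t. (\<lambda>p. \<phi> (Phi k (fst p), snd p ?i)) (TT k \<omega>, t) \<partial>(distr M ?B ?Y2))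
        = (\<integral>\<^sup>+t. \<phi> ((x k \<omega>, z k \<omega>, d k \<omega>), t ?i) \<partial>(distr M ?B ?Y2))"
      by (simp only: fst_conv snd_conv e1)
    also have "\<dots> = (\<integral>\<^sup>+\<omega>'. \<phi> ((x k \<omega>, z k \<omega>, d k \<omega>), ?Y2 \<omega>' ?i) \<partial>M)"
    proof (rule nn_integral_distr[OF Y2m])
      show "(\<lambda>t. \<phi> ((x k \<omega>, z k \<omega>, d k \<omega>), t ?i)) \<in> borel_measurable (distr M ?B ?Y2)"
        unfolding measurable_distr_eq1 by (rule measurable_compose[OF ci phic])
    qed
    also have "\<dots> = (\<integral>\<^sup>+\<omega>'. \<phi> ((x k \<omega>, z k \<omega>, d k \<omega>), Xs ?i \<omega>') \<partial>M)"
    proof -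
      have "?Y2 \<omega>' ?i = Xs ?i \<omega>'" for \<omega>' by (rule restrict_apply') blast
      then show ?thesis by (simp only:)
    qed
    also have "\<dots> = (\<integral>\<^sup>+s. \<phi> ((x k \<omega>, z k \<omega>, d k \<omega>), s) \<partial>(distr M \<Xi> (Xs ?i)))"
    proof (rule nn_integral_distr[symmetric, OF Xi])
      show "(\<lambda>s. \<phi> ((x k \<omega>, z k \<omega>, d k \<omega>), s)) \<in> borel_measurable (distr M \<Xi> (Xs ?i))"
        unfolding measurable_distr_eq1 by (rule phic)
    qed
    also have "\<dots> = (\<integral>\<^sup>+s. \<phi> ((x k \<omega>, z k \<omega>, d k \<omega>), s) \<partial>\<Xi>)" by (simp only: dXi)
    finally show "(\<integral>\<^sup>+t. (\<lambda>p. \<phi> (Phi k (fst p), snd p ?i)) (TT k \<omega>, t) \<partial>(distr M ?B ?Y2))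
        = (\<integral>\<^sup>+s. \<phi> ((x k \<omega>, z k \<omega>, d k \<omega>), s) \<partial>\<Xi>)" .
  qed
  finally show ?thesis .
qed

end


lemma norm_add_scale_sq: "(norm (a + m *\<^sub>R b))\<^sup>2 = (norm a)\<^sup>2 + 2 * m * (a \<bullet> b) + m\<^sup>2 * (norm (b::'a::real_inner))\<^sup>2"
  by (simp add: norm_add_sq power_mult_distrib)

context setting
begin

lemma gradc_norm': "norm (gradc Dc xa w) \<le> G * norm w"
  by (rule gradc_norm[OF c_deriv c_smooth gradc_bd c_bd])

lemma e_eq: "d' + r *\<^sub>R gradc Dc xa (c xa) - gradQ gradf Dc c r xa = d' - gradf xa"
  by (simp add: gradQ_def)

lemma bnd1: "norm (Xup k (xa, za, da) - za) \<le> \<mu> k * norm (da - gradf xa) + \<mu> k * (2 * G + \<rho> k * G * C)"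
proof -
  define D where "D = da + \<rho> k *\<^sub>R gradc Dc xa (c xa)"
  define u where "u = za - \<mu> k *\<^sub>R D"
  have X: "Xup k (xa, za, da) = prox (\<mu> k) h u" by (simp add: Xup_def u_def D_def)
  have "Xup k (xa, za, da) - za = (prox (\<mu> k) h u - u) - \<mu> k *\<^sub>R D" by (simp add: X u_def)
  then have "norm (Xup k (xa, za, da) - za) \<le> norm (prox (\<mu> k) h u - u) + norm (\<mu> k *\<^sub>R D)"
    by (metis norm_triangle_ineq4)
  also have "\<dots> \<le> \<mu> k * G + \<mu> k * norm D"
    using prox_bd[OF h_convex h_subgrad_bd mu_pos[of k], where u=u] mu_pos[of k] by simp
  also have "norm D \<le> norm (da - gradf xa) + G + \<rho> k * (G * C)"
  proof -
    have "D = (da - gradf xa) + gradf xa + \<rho> k *\<^sub>R gradc Dc xa (c xa)" by (simp add: D_def)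
    then have "norm D \<le> norm (da - gradf xa) + norm (gradf xa) + norm (\<rho> k *\<^sub>R gradc Dc xa (c xa))"
      by (metis norm_triangle_le add_right_mono norm_triangle_ineq)
    moreover have "norm (\<rho> k *\<^sub>R gradc Dc xa (c xa)) \<le> \<rho> k * (G * C)"
    proof -
      have "norm (gradc Dc xa (c xa)) \<le> G * norm (c xa)" by (rule gradc_norm')
      also have "\<dots> \<le> G * C" using c_bd[of xa] G_pos by (intro mult_left_mono) auto
      finally show ?thesis using rho_pos[of k] by (simp add: mult_left_mono)
    qed
    ultimately show ?thesis using gradf_bd[of xa] by linarith
  qed
  then have "\<mu> k * norm D \<le> \<mu> k * (norm (da - gradf xa) + G + \<rho> k * (G * C))"
    using mu_pos[of k] by (intro mult_left_mono) auto
  finally show ?thesis by (simp add: algebra_simps)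
qed

lemma bnd2: "norm (Xup k p - Zup k p) \<le> norm (Xup k p - fst (snd p)) + \<mu> k * G"
proof -
  define pg where "pg = prox (\<mu> k) g (fst (snd p))"
  have "Xup k p - Zup k p = (1 - \<beta>) *\<^sub>R (Xup k p - fst (snd p)) + \<beta> *\<^sub>R (pg - fst (snd p))"
    by (simp add: Zup_def pg_def algebra_simps)
  then have "norm (Xup k p - Zup k p) \<le> norm ((1 - \<beta>) *\<^sub>R (Xup k p - fst (snd p))) + norm (\<beta> *\<^sub>R (pg - fst (snd p)))"
    by (metis norm_triangle_ineq)
  also have "\<dots> = (1 - \<beta>) * norm (Xup k p - fst (snd p)) + \<beta> * norm (pg - fst (snd p))"
    using beta by simp
  also have "\<dots> \<le> 1 * norm (Xup k p - fst (snd p)) + 1 * (\<mu> k * G)"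
    using beta prox_bd[OF g_convex g_subgrad_bd mu_pos[of k], where u="fst (snd p)"]
    by (intro add_mono mult_mono) (auto simp: pg_def)
  finally show ?thesis by simp
qed

lemma x_step:
  "Lpot f c h g (\<rho> k) (\<mu> k) (Xup k (xa, za, da)) za
     \<le> Lpot f c h g (\<rho> k) (\<mu> k) xa za - (norm (Xup k (xa, za, da) - xa))\<^sup>2 / (8 * \<mu> k)
        + \<mu> k * (norm (da - gradf xa))\<^sup>2"
proof -
  define m where "m = \<mu> k"
  define r where "r = \<rho> k"
  have m: "m > 0" using mu_pos by (simp add: m_def)
  have r: "r \<ge> 0" using rho_pos[of k] by (simp add: r_def)
  define D where "D = da + r *\<^sub>R gradc Dc xa (c xa)"
  define e where "e = da - gradf xa"
  define u where "u = za - m *\<^sub>R D"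
  define xn where "xn = Xup k (xa, za, da)"
  define N where "N = (norm (xn - xa))\<^sup>2"
  define Lq where "Lq = Lf + r * (C * Lc + G\<^sup>2)"
  have X: "xn = prox m h u" by (simp add: xn_def Xup_def u_def D_def m_def r_def)
  have three: "h xn + (norm (xn - u))\<^sup>2 / (2 * m) + (norm (xa - xn))\<^sup>2 / (2 * m) \<le> h xa + (norm (xa - u))\<^sup>2 / (2 * m)"
    unfolding X by (rule prox_three[OF h_convex m])
  have Qd: "Qpen f c r xn \<le> Qpen f c r xa + gradQ gradf Dc c r xa \<bullet> (xn - xa) + Lq / 2 * N"
    unfolding Lq_def N_def by (rule Q_descent[OF c_deriv c_smooth gradc_bd c_bd f_grad f_smooth r])
  have gQ: "gradQ gradf Dc c r xa = D - e" by (simp add: gradQ_def D_def e_def)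
  have exp1: "(norm (xn - u))\<^sup>2 / (2 * m) = (norm (xn - za))\<^sup>2 / (2 * m) + (xn - za) \<bullet> D + m / 2 * (norm D)\<^sup>2"
  proof -
    have e: "xn - u = (xn - za) + m *\<^sub>R D" by (simp add: u_def)
    have "(norm (xn - u))\<^sup>2 = (norm (xn - za))\<^sup>2 + 2 * m * ((xn - za) \<bullet> D) + m\<^sup>2 * (norm D)\<^sup>2"
      unfolding e by (rule norm_add_scale_sq)
    then show ?thesis using m by (simp add: field_simps power2_eq_square)
  qed
  have exp2: "(norm (xa - u))\<^sup>2 / (2 * m) = (norm (xa - za))\<^sup>2 / (2 * m) + (xa - za) \<bullet> D + m / 2 * (norm D)\<^sup>2"
  proof -
    have e: "xa - u = (xa - za) + m *\<^sub>R D" by (simp add: u_def)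
    have "(norm (xa - u))\<^sup>2 = (norm (xa - za))\<^sup>2 + 2 * m * ((xa - za) \<bullet> D) + m\<^sup>2 * (norm D)\<^sup>2"
      unfolding e by (rule norm_add_scale_sq)
    then show ?thesis using m by (simp add: field_simps power2_eq_square)
  qed
  have ip: "(xn - za) \<bullet> D - (xa - za) \<bullet> D = (D - e) \<bullet> (xn - xa) + e \<bullet> (xn - xa)"
    by (simp add: inner_diff_left inner_diff_right inner_commute)
  have nc: "(norm (xa - xn))\<^sup>2 = N" by (simp add: N_def norm_minus_commute)
  have cs: "- (e \<bullet> (xn - xa)) \<le> m * (norm e)\<^sup>2 + N / (4 * m)"
  proof -
    have "- (e \<bullet> (xn - xa)) \<le> norm e * norm (xn - xa)"
      using norm_cauchy_schwarz[of "-e" "xn - xa"] by simp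
    moreover have "norm e * norm (xn - xa) \<le> m * (norm e)\<^sup>2 + N / (4 * m)"
    proof -
      define a b where "a = norm e" and "b = norm (xn - xa)"
      have "0 \<le> (2 * m * a - b)\<^sup>2" by simp
      moreover have "(2 * m * a - b)\<^sup>2 = 4 * m * (m * a\<^sup>2) - 4 * m * (a * b) + b\<^sup>2"
        by (simp add: power2_eq_square algebra_simps)
      ultimately have "4 * m * (a * b) \<le> 4 * m * (m * a\<^sup>2) + b\<^sup>2" by linarith
      moreover have "4 * m * (m * a\<^sup>2 + b\<^sup>2 / (4 * m)) = 4 * m * (m * a\<^sup>2) + b\<^sup>2"
        using m by (simp add: distrib_left)
      ultimately have "4 * m * (a * b) \<le> 4 * m * (m * a\<^sup>2 + b\<^sup>2 / (4 * m))" by linarith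
      then have "a * b \<le> m * a\<^sup>2 + b\<^sup>2 / (4 * m)" using m by (simp add: mult_le_cancel_left_pos)
      then show ?thesis by (simp add: a_def b_def N_def)
    qed
    ultimately show ?thesis by linarith
  qed
  have LqN: "Lq / 2 * N \<le> N / (8 * m)"
  proof -
    have "m * Lq \<le> 1 / 4" using Lq_le[of k] by (simp add: Lq_def m_def r_def)
    then have "Lq \<le> 1 / (4 * m)" using m by (simp add: field_simps)
    then have "Lq / 2 * N \<le> 1 / (4 * m) / 2 * N" by (intro mult_right_mono) (auto simp: N_def)
    then show ?thesis by simp
  qed
  have arith: "N / (4 * m) + N / (8 * m) - N / (2 * m) = - (N / (8 * m))" using m by (simp add: field_simps)
  show ?thesis
    unfolding Lpot_def xn_def[symmetric] m_def[symmetric] r_def[symmetric] N_def[symmetric] e_def[symmetric]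
    using three Qd gQ exp1 exp2 ip nc cs LqN arith by (simp add: inner_commute)
qed

lemma z_step_gen:
  assumes m: "m > 0"
  shows "Lpot f c h g r m xn (za - \<beta> *\<^sub>R (prox m g za - xn)) \<le> Lpot f c h g r m xn za"
proof -
  define pg where "pg = prox m g za"
  define zn where "zn = za - \<beta> *\<^sub>R (pg - xn)"
  define pn where "pn = prox m g zn"
  define v where "v = (1 / m) *\<^sub>R (za - pg)"
  define w where "w = pg - xn"
  define W where "W = (norm w)\<^sup>2"
  define Y where "Y = (za - pg) \<bullet> w"
  have Mz: "moreau m g za = g pg + (norm (pg - za))\<^sup>2 / (2 * m)" using moreau_eq[OF g_convex m] pg_def by simp
  have Mzn: "moreau m g zn = g pn + (norm (pn - zn))\<^sup>2 / (2 * m)" using moreau_eq[OF g_convex m] pn_def by simp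
  have sg: "g pg + v \<bullet> (pn - pg) \<le> g pn" using prox_subgrad[OF g_convex m, of za pn] by (simp add: v_def pg_def)
  have quad: "v \<bullet> (pn - zn) + (norm (pn - zn))\<^sup>2 / (2 * m) \<ge> - (m / 2 * (norm v)\<^sup>2)"
  proof -
    have "0 \<le> (norm ((pn - zn) + m *\<^sub>R v))\<^sup>2" by simp
    also have "\<dots> = (norm (pn - zn))\<^sup>2 + 2 * m * ((pn - zn) \<bullet> v) + m\<^sup>2 * (norm v)\<^sup>2"
      by (rule norm_add_scale_sq)
    finally have "0 \<le> (norm (pn - zn))\<^sup>2 + 2 * m * ((pn - zn) \<bullet> v) + m\<^sup>2 * (norm v)\<^sup>2" .
    then have "0 \<le> ((norm (pn - zn))\<^sup>2 + 2 * m * ((pn - zn) \<bullet> v) + m\<^sup>2 * (norm v)\<^sup>2) / (2 * m)" using m by simp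
    also have "\<dots> = v \<bullet> (pn - zn) + (norm (pn - zn))\<^sup>2 / (2 * m) + m / 2 * (norm v)\<^sup>2"
      using m by (simp add: field_simps power2_eq_square inner_commute)
    finally show ?thesis by linarith
  qed
  have vsplit: "v \<bullet> (pn - pg) = v \<bullet> (pn - zn) + v \<bullet> (zn - pg)" by (simp add: inner_diff_right)
  have nv0: "norm v = norm (pg - za) / m"
  proof -
    have "norm v = \<bar>1 / m\<bar> * norm (za - pg)" unfolding v_def by (rule norm_scaleR)
    then show ?thesis using m by (simp add: norm_minus_commute)
  qed
  have nv: "(norm (pg - za))\<^sup>2 / (2 * m) = m / 2 * (norm v)\<^sup>2"
    unfolding nv0 using m by (simp add: power_divide power2_eq_square field_simps)
  have vz: "v \<bullet> (zn - pg) = m * (norm v)\<^sup>2 - \<beta> * (Y / m)"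
  proof -
    have e: "zn - pg = (za - pg) - \<beta> *\<^sub>R w" by (simp add: zn_def w_def)
    have "v \<bullet> (zn - pg) = v \<bullet> (za - pg) - \<beta> * (v \<bullet> w)" unfolding e by (simp add: inner_diff_right)
    moreover have "v \<bullet> (za - pg) = (1 / m) * ((za - pg) \<bullet> (za - pg))" unfolding v_def by (rule inner_scaleR_left)
    moreover have "v \<bullet> w = (1 / m) * Y" unfolding v_def Y_def by (rule inner_scaleR_left)
    moreover have X: "(za - pg) \<bullet> (za - pg) = (norm (pg - za))\<^sup>2" by (metis power2_norm_eq_inner norm_minus_commute)
    moreover have "m * (norm v)\<^sup>2 = (1 / m) * (norm (pg - za))\<^sup>2"
      unfolding nv0 using m by (simp add: power_divide power2_eq_square field_simps)
    ultimately show ?thesis by simp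
  qed
  have Mdiff: "moreau m g zn - moreau m g za \<ge> - (\<beta> * (Y / m))"
    using Mz Mzn sg quad vsplit nv vz by linarith
  have xz: "(norm (xn - zn))\<^sup>2 / (2 * m) - (norm (xn - za))\<^sup>2 / (2 * m) = \<beta> * (- W - Y) / m + \<beta>\<^sup>2 * W / (2 * m)"
  proof -
    have e: "xn - zn = (xn - za) + \<beta> *\<^sub>R w" by (simp add: zn_def w_def)
    have "(norm (xn - zn))\<^sup>2 = (norm (xn - za))\<^sup>2 + 2 * \<beta> * ((xn - za) \<bullet> w) + \<beta>\<^sup>2 * W"
      unfolding e W_def by (rule norm_add_scale_sq)
    moreover have "(xn - za) \<bullet> w = - W - Y"
    proof -
      have "(xn - za) = - w - (za - pg)" by (simp add: w_def)
      then show ?thesis by (simp add: W_def Y_def inner_diff_left power2_norm_eq_inner)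
    qed
    ultimately have d1: "(norm (xn - zn))\<^sup>2 - (norm (xn - za))\<^sup>2 = 2 * \<beta> * (- W - Y) + \<beta>\<^sup>2 * W"
      by simp
    have "(norm (xn - zn))\<^sup>2 / (2 * m) - (norm (xn - za))\<^sup>2 / (2 * m) = ((norm (xn - zn))\<^sup>2 - (norm (xn - za))\<^sup>2) / (2 * m)"
      by (rule diff_divide_distrib[symmetric])
    also have "\<dots> = (2 * \<beta> * (- W - Y) + \<beta>\<^sup>2 * W) / (2 * m)" unfolding d1 ..
    also have "\<dots> = \<beta> * (- W - Y) / m + \<beta>\<^sup>2 * W / (2 * m)" using m by (simp add: add_divide_distrib)
    finally show ?thesis .
  qed
  have bb: "\<beta>\<^sup>2 * W / (2 * m) \<le> \<beta> * W / m"
  proof -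
    have "\<beta>\<^sup>2 * W \<le> (2 * \<beta>) * W" using beta by (intro mult_right_mono) (auto simp: W_def power2_eq_square)
    then show ?thesis using m by (simp add: field_simps)
  qed
  have "\<beta> * (- W - Y) / m = - (\<beta> * W / m) - \<beta> * (Y / m)" using m by (simp add: field_simps)
  then show ?thesis unfolding Lpot_def pg_def[symmetric] zn_def[symmetric]
    using Mdiff xz bb by linarith
qed

lemma z_step: "Lpot f c h g (\<rho> k) (\<mu> k) (Xup k p) (Zup k p) \<le> Lpot f c h g (\<rho> k) (\<mu> k) (Xup k p) (fst (snd p))"
  unfolding Zup_def by (rule z_step_gen[OF mu_pos])

lemma param_step:
  assumes r: "r \<le> r'" and m: "0 < m'" "m' \<le> m"
  shows "Lpot f c h g r' m' xx zz \<le> Lpot f c h g r m xx zz + (r' - r) / 2 * C\<^sup>2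
           + \<bar>m - m'\<bar> / (2 * m'\<^sup>2) * (C\<^sup>2 + (norm (xx - zz))\<^sup>2)"
proof -
  define N where "N = (norm (xx - zz))\<^sup>2"
  have N: "N \<ge> 0" by (simp add: N_def)
  have cc: "(norm (c xx))\<^sup>2 \<le> C\<^sup>2" using c_bd[of xx] by (intro power_mono) auto
  have Q: "Qpen f c r' xx \<le> Qpen f c r xx + (r' - r) / 2 * C\<^sup>2"
  proof -
    have "(r' - r) / 2 * (norm (c xx))\<^sup>2 \<le> (r' - r) / 2 * C\<^sup>2" using r cc by (intro mult_left_mono) auto
    moreover have "r' / 2 * (norm (c xx))\<^sup>2 = r / 2 * (norm (c xx))\<^sup>2 + (r' - r) / 2 * (norm (c xx))\<^sup>2"
      by (simp add: field_simps)
    ultimately show ?thesis unfolding Qpen_def by linarith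
  qed
  have mm: "N / (2 * m') - N / (2 * m) \<le> (m - m') / (2 * m'\<^sup>2) * N"
  proof -
    have "N / (2 * m') - N / (2 * m) = (m - m') / (2 * (m * m')) * N" using m by (simp add: field_simps)
    also have "\<dots> \<le> (m - m') / (2 * m'\<^sup>2) * N"
    proof (intro mult_right_mono N divide_left_mono)
      show "2 * m'\<^sup>2 \<le> 2 * (m * m')" using m by (simp add: power2_eq_square mult_right_mono)
    qed (use m in auto)
    finally show ?thesis .
  qed
  have M: "moreau m g zz \<le> moreau m' g zz" by (rule moreau_anti[OF g_convex m])
  have C2: "0 \<le> (m - m') / (2 * m'\<^sup>2) * C\<^sup>2" using m by simp
  have ab: "\<bar>m - m'\<bar> = m - m'" using m by simp
  have sp: "(m - m') / (2 * m'\<^sup>2) * (C\<^sup>2 + N) = (m - m') / (2 * m'\<^sup>2) * C\<^sup>2 + (m - m') / (2 * m'\<^sup>2) * N"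
    by (rule distrib_left)
  show ?thesis unfolding Lpot_def N_def[symmetric] ab using Q mm M C2 sp by linarith
qed

lemma L_lower:
  assumes r: "r \<ge> 0" and m: "m > 0"
  shows "Fstar f h g - G\<^sup>2 * \<mu>bar / 2 \<le> Lpot f c h g r m xx zz"
proof -
  have "Fstar f h g \<le> f xx + h xx - g xx" unfolding Fstar_def by (rule cINF_lower[OF Fstar_finite]) simp
  moreover have "moreau m g zz \<le> g xx + (norm (xx - zz))\<^sup>2 / (2 * m)" by (rule moreau_le[OF g_convex m])
  moreover have "f xx \<le> Qpen f c r xx" using r by (simp add: Qpen_def)
  moreover have "0 \<le> G\<^sup>2 * \<mu>bar / 2" using mubar_nonneg by simp
  ultimately show ?thesis unfolding Lpot_def by linarith
qed

end


lemma sq3: "(p + q + r)\<^sup>2 \<le> 3 * (p\<^sup>2 + q\<^sup>2 + (r::real)\<^sup>2)"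
proof -
  have "0 \<le> (p - q)\<^sup>2 + (q - r)\<^sup>2 + (p - r)\<^sup>2" by simp
  then show ?thesis by (simp add: power2_eq_square algebra_simps)
qed

lemma sq2: "(p + q)\<^sup>2 \<le> 2 * (p\<^sup>2 + (q::real)\<^sup>2)"
proof -
  have "0 \<le> (p - q)\<^sup>2" by simp
  then show ?thesis by (simp add: power2_eq_square algebra_simps)
qed

lemma sq_mono: "0 \<le> a \<Longrightarrow> a \<le> (b::real) \<Longrightarrow> a\<^sup>2 \<le> b\<^sup>2"
  by (rule power_mono) auto

lemma telescope_weighted:
  fixes m b :: "nat \<Rightarrow> real"
  assumes m: "\<And>k. m (Suc k) \<le> m k" "\<And>k. 0 \<le> m k" and b: "\<And>k. 0 \<le> b k"
  shows "(\<Sum>k<K. m k * (b k - b (Suc k))) \<le> m 0 * b 0 - m K * b K"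
proof (induction K)
  case (Suc K)
  have "m (Suc K) * b (Suc K) \<le> m K * b (Suc K)" using m(1)[of K] b[of "Suc K"] by (rule mult_right_mono)
  then show ?case using Suc by (simp add: algebra_simps)
qed simp

context setting
begin

definition EE :: "nat \<Rightarrow> 'm \<Rightarrow> real" where "EE k \<omega> = (norm (d k \<omega> - gradf (x k \<omega>)))\<^sup>2"
definition DD :: "nat \<Rightarrow> 'm \<Rightarrow> real" where "DD k \<omega> = (norm (x (Suc k) \<omega> - x k \<omega>))\<^sup>2"
definition QQ :: "nat \<Rightarrow> 'm \<Rightarrow> real" where "QQ k \<omega> = (norm (x k \<omega> - z k \<omega>))\<^sup>2"
definition RR :: "nat \<Rightarrow> 'm \<Rightarrow> real" where
  "RR k \<omega> = (\<rho> (Suc k) - \<rho> k) / 2 * C\<^sup>2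
     + \<bar>\<mu> k - \<mu> (Suc k)\<bar> / (2 * (\<mu> (Suc k))\<^sup>2) * (C\<^sup>2 + (norm (x (Suc k) \<omega> - z (Suc k) \<omega>))\<^sup>2)"
definition B0 :: "nat \<Rightarrow> real" where "B0 k = \<mu> k * (2 * G + \<rho> k * G * C)"

lemma sqn_meas:
  fixes F :: "'q \<Rightarrow> 'a"
  shows "F \<in> borel_measurable N \<Longrightarrow> (\<lambda>t. (norm (F t))\<^sup>2) \<in> borel_measurable N"
  by (rule meas_cont_comp) (auto intro!: continuous_intros)

lemma e_meas: "(\<lambda>\<omega>. d k \<omega> - gradf (x k \<omega>)) \<in> borel_measurable M"
  using d_meas gradfx_meas by (rule borel_measurable_diff)

lemma EE_meas: "EE k \<in> borel_measurable M"
  unfolding EE_def[abs_def] by (rule sqn_meas[OF e_meas])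
lemma DD_meas: "DD k \<in> borel_measurable M"
  unfolding DD_def[abs_def] by (intro sqn_meas borel_measurable_diff x_meas)
lemma QQ_meas: "QQ k \<in> borel_measurable M"
  unfolding QQ_def[abs_def] by (intro sqn_meas borel_measurable_diff x_meas z_meas)

lemma EE_nn: "EE k \<omega> \<ge> 0" by (simp add: EE_def)
lemma DD_nn: "DD k \<omega> \<ge> 0" by (simp add: DD_def)
lemma QQ_nn: "QQ k \<omega> \<ge> 0" by (simp add: QQ_def)
lemma B0_nn: "B0 k \<ge> 0" using mu_pos[of k] rho_pos[of k] G_pos C_pos by (simp add: B0_def)

lemma bx1: "norm (x (Suc k) \<omega> - z k \<omega>) \<le> \<mu> k * norm (d k \<omega> - gradf (x k \<omega>)) + B0 k"
  unfolding x_Suc' B0_def by (rule bnd1)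

lemma bDD: "DD k \<omega> \<le> 3 * ((\<mu> k)\<^sup>2 * EE k \<omega> + (B0 k)\<^sup>2 + QQ k \<omega>)"
proof -
  have "norm (x (Suc k) \<omega> - x k \<omega>) \<le> norm (x (Suc k) \<omega> - z k \<omega>) + norm (x k \<omega> - z k \<omega>)"
    using norm_triangle_ineq4[of "x (Suc k) \<omega> - z k \<omega>" "x k \<omega> - z k \<omega>"] by simp
  also have "\<dots> \<le> \<mu> k * norm (d k \<omega> - gradf (x k \<omega>)) + B0 k + norm (x k \<omega> - z k \<omega>)"
    using bx1 by simp
  finally have "DD k \<omega> \<le> (\<mu> k * norm (d k \<omega> - gradf (x k \<omega>)) + B0 k + norm (x k \<omega> - z k \<omega>))\<^sup>2"
    unfolding DD_def by (rule sq_mono[OF norm_ge_zero])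
  also have "\<dots> \<le> 3 * ((\<mu> k * norm (d k \<omega> - gradf (x k \<omega>)))\<^sup>2 + (B0 k)\<^sup>2 + (norm (x k \<omega> - z k \<omega>))\<^sup>2)"
    by (rule sq3)
  finally show ?thesis by (simp add: EE_def QQ_def power_mult_distrib)
qed

lemma bQQ: "QQ (Suc k) \<omega> \<le> 2 * ((\<mu> k)\<^sup>2 * EE k \<omega> + (B0 k + \<mu> k * G)\<^sup>2)"
proof -
  have "norm (x (Suc k) \<omega> - z (Suc k) \<omega>) \<le> norm (x (Suc k) \<omega> - z k \<omega>) + \<mu> k * G"
    unfolding x_Suc' z_Suc' using bnd2[of k "(x k \<omega>, z k \<omega>, d k \<omega>)"] by simp
  also have "\<dots> \<le> \<mu> k * norm (d k \<omega> - gradf (x k \<omega>)) + (B0 k + \<mu> k * G)" using bx1 by simp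
  finally have "QQ (Suc k) \<omega> \<le> (\<mu> k * norm (d k \<omega> - gradf (x k \<omega>)) + (B0 k + \<mu> k * G))\<^sup>2"
    unfolding QQ_def by (rule sq_mono[OF norm_ge_zero])
  also have "\<dots> \<le> 2 * ((\<mu> k * norm (d k \<omega> - gradf (x k \<omega>)))\<^sup>2 + (B0 k + \<mu> k * G)\<^sup>2)" by (rule sq2)
  finally show ?thesis by (simp add: EE_def power_mult_distrib)
qed

lemma int_bound:
  fixes F H :: "'m \<Rightarrow> real"
  assumes "integrable M H" "F \<in> borel_measurable M" "\<And>\<omega>. 0 \<le> F \<omega>" "\<And>\<omega>. F \<omega> \<le> H \<omega>"
  shows "integrable M F"
  by (rule Bochner_Integration.integrable_bound[OF assms(1) assms(2)])
     (use assms(3,4) in \<open>auto intro!: AE_I2 intro: order_trans[OF _ abs_ge_self] simp: abs_of_nonneg\<close>)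

lemma phi_meas:
  "(\<lambda>q. ennreal ((norm (gradF (Xup k (fst q)) (snd q) + (1 - \<alpha> k) *\<^sub>R (snd (snd (fst q)) - gradF (fst (fst q)) (snd q))
      - gradf (Xup k (fst q))))\<^sup>2)) \<in> borel_measurable ((borel :: ('a \<times> 'a \<times> 'a) measure) \<Otimes>\<^sub>M \<Xi>)"
proof -
  let ?N = "(borel :: ('a \<times> 'a \<times> 'a) measure) \<Otimes>\<^sub>M \<Xi>"
  have f1: "(\<lambda>q. fst q) \<in> ?N \<rightarrow>\<^sub>M borel" by (rule measurable_fst)
  have s1: "(\<lambda>q. snd q) \<in> ?N \<rightarrow>\<^sub>M \<Xi>" by (rule measurable_snd)
  have a: "(\<lambda>q. Xup k (fst q)) \<in> borel_measurable ?N" by (rule meas_cont_comp[OF cont_Xup f1])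
  have b: "(\<lambda>q. fst (fst q)) \<in> borel_measurable ?N"
    by (rule meas_cont_comp[OF _ f1]) (intro continuous_intros)
  have c: "(\<lambda>q. snd (snd (fst q))) \<in> borel_measurable ?N"
    by (rule meas_cont_comp[OF _ f1]) (intro continuous_intros)
  have e: "(\<lambda>q. gradf (Xup k (fst q))) \<in> borel_measurable ?N" by (rule meas_cont_comp[OF gradf_cont a])
  have "(\<lambda>q. gradF (Xup k (fst q)) (snd q) + (1 - \<alpha> k) *\<^sub>R (snd (snd (fst q)) - gradF (fst (fst q)) (snd q))
      - gradf (Xup k (fst q))) \<in> borel_measurable ?N"
    by (intro borel_measurable_add borel_measurable_diff borel_measurable_scaleR gradF_comp a b c e s1 measurable_const) simp
  from sqn_meas[OF this] show ?thesis by (rule measurable_compose[OF _ measurable_ennreal])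
qed

lemma rec_nn:
  "(\<integral>\<^sup>+\<omega>. ennreal (EE (Suc k) \<omega>) \<partial>M)
     \<le> (\<integral>\<^sup>+\<omega>. ennreal ((1 - \<alpha> k)\<^sup>2 * EE k \<omega> + 2 * (\<alpha> k)\<^sup>2 * \<sigma>\<^sup>2 + 2 * (1 - \<alpha> k)\<^sup>2 * Lf\<^sup>2 * DD k \<omega>) \<partial>M)"
proof -
  define \<phi> where "\<phi> q = ennreal ((norm (gradF (Xup k (fst q)) (snd q) + (1 - \<alpha> k) *\<^sub>R (snd (snd (fst q)) - gradF (fst (fst q)) (snd q))
      - gradf (Xup k (fst q))))\<^sup>2)" for q :: "('a \<times> 'a \<times> 'a) \<times> 's"
  have pm: "\<phi> \<in> borel_measurable ((borel :: ('a \<times> 'a \<times> 'a) measure) \<Otimes>\<^sub>M \<Xi>)"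
    unfolding \<phi>_def[abs_def] by (rule phi_meas)
  have "(\<integral>\<^sup>+\<omega>. ennreal (EE (Suc k) \<omega>) \<partial>M) = (\<integral>\<^sup>+\<omega>. \<phi> ((x k \<omega>, z k \<omega>, d k \<omega>), Xs (Inr (Suc k)) \<omega>) \<partial>M)"
  proof (rule nn_integral_cong)
    fix \<omega>
    have "d (Suc k) \<omega> - gradf (x (Suc k) \<omega>) = gradF (Xup k (x k \<omega>, z k \<omega>, d k \<omega>)) (Xs (Inr (Suc k)) \<omega>)
        + (1 - \<alpha> k) *\<^sub>R (d k \<omega> - gradF (x k \<omega>) (Xs (Inr (Suc k)) \<omega>)) - gradf (Xup k (x k \<omega>, z k \<omega>, d k \<omega>))"
      unfolding d_Suc x_Suc' ..
    then show "ennreal (EE (Suc k) \<omega>) = \<phi> ((x k \<omega>, z k \<omega>, d k \<omega>), Xs (Inr (Suc k)) \<omega>)"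
      unfolding EE_def \<phi>_def fst_conv snd_conv by simp
  qed
  also have "\<dots> = (\<integral>\<^sup>+\<omega>. (\<integral>\<^sup>+s. \<phi> ((x k \<omega>, z k \<omega>, d k \<omega>), s) \<partial>\<Xi>) \<partial>M)"
    by (rule indep_step[OF pm])
  also have "\<dots> \<le> (\<integral>\<^sup>+\<omega>. ennreal ((1 - \<alpha> k)\<^sup>2 * EE k \<omega> + 2 * (\<alpha> k)\<^sup>2 * \<sigma>\<^sup>2 + 2 * (1 - \<alpha> k)\<^sup>2 * Lf\<^sup>2 * DD k \<omega>) \<partial>M)"
  proof (rule nn_integral_mono)
    fix \<omega>
    have a: "0 \<le> \<alpha> k" "\<alpha> k \<le> 1" using alpha_pos[of k] alpha(3)[of k] by auto
    have "(\<integral>\<^sup>+s. \<phi> ((x k \<omega>, z k \<omega>, d k \<omega>), s) \<partial>\<Xi>)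
        = (\<integral>\<^sup>+s. ennreal ((norm (gradF (x (Suc k) \<omega>) s + (1 - \<alpha> k) *\<^sub>R (d k \<omega> - gradF (x k \<omega>) s) - gradf (x (Suc k) \<omega>)))\<^sup>2) \<partial>\<Xi>)"
      unfolding \<phi>_def fst_conv snd_conv x_Suc' ..
    also have "\<dots> \<le> ennreal ((1 - \<alpha> k)\<^sup>2 * (norm (d k \<omega> - gradf (x k \<omega>)))\<^sup>2 + 2 * (\<alpha> k)\<^sup>2 * \<sigma>\<^sup>2
        + 2 * (1 - \<alpha> k)\<^sup>2 * Lf\<^sup>2 * (norm (x (Suc k) \<omega> - x k \<omega>))\<^sup>2)"
      by (rule inner_main[OF prob_Xi A2_int A2_unbiased A2_var A4 a])
    finally show "(\<integral>\<^sup>+s. \<phi> ((x k \<omega>, z k \<omega>, d k \<omega>), s) \<partial>\<Xi>)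
        \<le> ennreal ((1 - \<alpha> k)\<^sup>2 * EE k \<omega> + 2 * (\<alpha> k)\<^sup>2 * \<sigma>\<^sup>2 + 2 * (1 - \<alpha> k)\<^sup>2 * Lf\<^sup>2 * DD k \<omega>)"
      unfolding EE_def DD_def .
  qed
  finally show ?thesis .
qed

lemma EE0_int: "integrable M (EE 0)"
proof -
  define a where "a j \<omega> = gradF x0 (Xs (Inl j) \<omega>) - gradf x0" for j \<omega>
  have Inl_II: "Inl j \<in> II" if "j < b0" for j using that by (simp add: II_def)
  have ai: "integrable M (\<lambda>\<omega>. (norm (a j \<omega>))\<^sup>2)" if j: "j < b0" for j
  proof -
    have Xm: "Xs (Inl j) \<in> M \<rightarrow>\<^sub>M \<Xi>" by (rule Xs_meas[OF Inl_II[OF j]])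
    have "integrable \<Xi> (\<lambda>s. (norm (gradF x0 s - gradf x0))\<^sup>2)"
      by (rule sqA_int[OF prob_Xi A2_int A2_unbiased A2_var A4])
    then have "integrable (distr M \<Xi> (Xs (Inl j))) (\<lambda>s. (norm (gradF x0 s - gradf x0))\<^sup>2)"
      using Xs_distr[of "Inl j"] j by simp
    then show ?thesis unfolding a_def using integrable_distr[OF Xm] by blast
  qed
  have eq: "d 0 \<omega> - gradf (x 0 \<omega>) = (1 / real b0) *\<^sub>R (\<Sum>j<b0. a j \<omega>)" for \<omega>
  proof -
    have s1: "(\<Sum>j<b0. a j \<omega>) = (\<Sum>j<b0. gradF x0 (Xs (Inl j) \<omega>)) - (\<Sum>j<b0. gradf x0)"
      by (simp add: a_def sum_subtractf)
    have s2: "(\<Sum>j<b0. gradf x0) = real b0 *\<^sub>R gradf x0" by (subst sum_constant_scaleR) simp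
    have s3: "(1 / real b0) *\<^sub>R (real b0 *\<^sub>R gradf x0) = gradf x0" using b0_pos by simp
    have "(1 / real b0) *\<^sub>R (\<Sum>j<b0. a j \<omega>) = (1 / real b0) *\<^sub>R (\<Sum>j<b0. gradF x0 (Xs (Inl j) \<omega>)) - gradf x0"
      unfolding s1 s2 scaleR_diff_right s3 ..
    then show ?thesis by (simp add: d_0 x_0)
  qed
  have bnd: "EE 0 \<omega> \<le> (\<Sum>j<b0. (norm (a j \<omega>))\<^sup>2)" for \<omega>
  proof -
    have "norm (\<Sum>j<b0. a j \<omega>) \<le> (\<Sum>j<b0. norm (a j \<omega>))" by (rule norm_sum)
    then have "(norm (\<Sum>j<b0. a j \<omega>))\<^sup>2 \<le> (\<Sum>j<b0. norm (a j \<omega>))\<^sup>2" by (rule sq_mono[OF norm_ge_zero])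
    also have "\<dots> \<le> real b0 * (\<Sum>j<b0. (norm (a j \<omega>))\<^sup>2)"
    proof -
      have "(\<Sum>j<n. norm (a j \<omega>))\<^sup>2 \<le> real n * (\<Sum>j<n. (norm (a j \<omega>))\<^sup>2)" for n
      proof (induction n)
        case (Suc n)
        define S where "S = (\<Sum>j<n. norm (a j \<omega>))"
        define r where "r = norm (a n \<omega>)"
        have cross: "2 * S * r \<le> (\<Sum>j<n. (norm (a j \<omega>))\<^sup>2) + real n * r\<^sup>2"
        proof -
          have "2 * S * r = (\<Sum>j<n. 2 * norm (a j \<omega>) * r)" by (simp add: S_def sum_distrib_right sum_distrib_left mult.assoc)
          also have "\<dots> \<le> (\<Sum>j<n. (norm (a j \<omega>))\<^sup>2 + r\<^sup>2)"
          proof (rule sum_mono)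
            fix j
            have "0 \<le> (norm (a j \<omega>) - r)\<^sup>2" by simp
            then show "2 * norm (a j \<omega>) * r \<le> (norm (a j \<omega>))\<^sup>2 + r\<^sup>2" by (simp add: power2_eq_square algebra_simps)
          qed
          also have "\<dots> = (\<Sum>j<n. (norm (a j \<omega>))\<^sup>2) + real n * r\<^sup>2" by (simp add: sum.distrib)
          finally show ?thesis .
        qed
        have "(\<Sum>j<Suc n. norm (a j \<omega>))\<^sup>2 = S\<^sup>2 + 2 * S * r + r\<^sup>2" by (simp add: S_def r_def power2_eq_square algebra_simps)
        also have "\<dots> \<le> real n * (\<Sum>j<n. (norm (a j \<omega>))\<^sup>2) + ((\<Sum>j<n. (norm (a j \<omega>))\<^sup>2) + real n * r\<^sup>2) + r\<^sup>2"
          using Suc.IH cross by (simp add: S_def)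
        also have "\<dots> = real (Suc n) * (\<Sum>j<Suc n. (norm (a j \<omega>))\<^sup>2)" by (simp add: r_def algebra_simps)
        finally show ?case .
      qed simp
      then show ?thesis .
    qed
    finally have A: "(norm (\<Sum>j<b0. a j \<omega>))\<^sup>2 \<le> real b0 * (\<Sum>j<b0. (norm (a j \<omega>))\<^sup>2)" .
    have "EE 0 \<omega> = (1 / real b0)\<^sup>2 * (norm (\<Sum>j<b0. a j \<omega>))\<^sup>2"
      unfolding EE_def eq by (simp add: power_divide)
    also have "\<dots> \<le> (1 / real b0)\<^sup>2 * (real b0 * (\<Sum>j<b0. (norm (a j \<omega>))\<^sup>2))" by (rule mult_left_mono[OF A]) simp
    also have "\<dots> = (1 / real b0) * (\<Sum>j<b0. (norm (a j \<omega>))\<^sup>2)" using b0_pos by (simp add: power2_eq_square)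
    also have "\<dots> \<le> 1 * (\<Sum>j<b0. (norm (a j \<omega>))\<^sup>2)" using b0_pos by (intro mult_right_mono) (auto intro: sum_nonneg)
    finally show ?thesis by simp
  qed
  show ?thesis
    by (rule int_bound[OF _ EE_meas EE_nn bnd]) (use ai in auto)
qed

lemma QQ0_int: "integrable M (QQ 0)"
proof -
  have "QQ 0 = (\<lambda>\<omega>. 0)" by (rule ext) (simp add: QQ_def x_0 z_0)
  then show ?thesis by simp
qed

lemma step_int:
  assumes E: "integrable M (EE k)" and Q: "integrable M (QQ k)"
  shows "integrable M (DD k)" "integrable M (QQ (Suc k))" "integrable M (EE (Suc k))"
    "(\<integral>\<omega>. EE (Suc k) \<omega> \<partial>M) \<le> (1 - \<alpha> k)\<^sup>2 * (\<integral>\<omega>. EE k \<omega> \<partial>M) + 2 * (\<alpha> k)\<^sup>2 * \<sigma>\<^sup>2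
        + 2 * (1 - \<alpha> k)\<^sup>2 * Lf\<^sup>2 * (\<integral>\<omega>. DD k \<omega> \<partial>M)"
proof -
  show D: "integrable M (DD k)"
    by (rule int_bound[OF _ DD_meas DD_nn bDD]) (use E Q in auto)
  show "integrable M (QQ (Suc k))"
    by (rule int_bound[OF _ QQ_meas QQ_nn bQQ]) (use E in auto)
  define RHS where "RHS \<omega> = (1 - \<alpha> k)\<^sup>2 * EE k \<omega> + 2 * (\<alpha> k)\<^sup>2 * \<sigma>\<^sup>2 + 2 * (1 - \<alpha> k)\<^sup>2 * Lf\<^sup>2 * DD k \<omega>" for \<omega>
  have RI: "integrable M RHS" unfolding RHS_def[abs_def] using E D by auto
  have Rnn: "0 \<le> RHS \<omega>" for \<omega> unfolding RHS_def using EE_nn[of k \<omega>] DD_nn[of k \<omega>] by simp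
  have nnE: "(\<integral>\<^sup>+\<omega>. ennreal (EE (Suc k) \<omega>) \<partial>M) \<le> ennreal (\<integral>\<omega>. RHS \<omega> \<partial>M)"
  proof -
    have "(\<integral>\<^sup>+\<omega>. ennreal (EE (Suc k) \<omega>) \<partial>M) \<le> (\<integral>\<^sup>+\<omega>. ennreal (RHS \<omega>) \<partial>M)"
      using rec_nn[of k] unfolding RHS_def .
    also have "\<dots> = ennreal (\<integral>\<omega>. RHS \<omega> \<partial>M)" by (rule nn_integral_eq_integral[OF RI]) (use Rnn in auto)
    finally show ?thesis .
  qed
  show EI: "integrable M (EE (Suc k))"
  proof (rule integrableI_bounded[OF EE_meas])
    have "(\<integral>\<^sup>+\<omega>. ennreal (norm (EE (Suc k) \<omega>)) \<partial>M) = (\<integral>\<^sup>+\<omega>. ennreal (EE (Suc k) \<omega>) \<partial>M)"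
      using EE_nn by simp
    also have "\<dots> < \<infinity>" using nnE by (rule le_less_trans) simp
    finally show "(\<integral>\<^sup>+\<omega>. ennreal (norm (EE (Suc k) \<omega>)) \<partial>M) < \<infinity>" .
  qed
  have "ennreal (\<integral>\<omega>. EE (Suc k) \<omega> \<partial>M) = (\<integral>\<^sup>+\<omega>. ennreal (EE (Suc k) \<omega>) \<partial>M)"
    by (rule nn_integral_eq_integral[symmetric, OF EI]) (use EE_nn in auto)
  also have "\<dots> \<le> ennreal (\<integral>\<omega>. RHS \<omega> \<partial>M)" by (rule nnE)
  finally have le1: "ennreal (\<integral>\<omega>. EE (Suc k) \<omega> \<partial>M) \<le> ennreal (\<integral>\<omega>. RHS \<omega> \<partial>M)" .
  have "0 \<le> (\<integral>\<omega>. RHS \<omega> \<partial>M)" by (intro integral_nonneg_AE AE_I2 Rnn)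
  then have "(\<integral>\<omega>. EE (Suc k) \<omega> \<partial>M) \<le> (\<integral>\<omega>. RHS \<omega> \<partial>M)" using le1
    by (subst (asm) ennreal_le_iff) auto
  also have "(\<integral>\<omega>. RHS \<omega> \<partial>M) = (1 - \<alpha> k)\<^sup>2 * (\<integral>\<omega>. EE k \<omega> \<partial>M) + 2 * (\<alpha> k)\<^sup>2 * \<sigma>\<^sup>2
        + 2 * (1 - \<alpha> k)\<^sup>2 * Lf\<^sup>2 * (\<integral>\<omega>. DD k \<omega> \<partial>M)"
    unfolding RHS_def[abs_def] using E D by (simp add: MP.prob_space)
  finally show "(\<integral>\<omega>. EE (Suc k) \<omega> \<partial>M) \<le> (1 - \<alpha> k)\<^sup>2 * (\<integral>\<omega>. EE k \<omega> \<partial>M) + 2 * (\<alpha> k)\<^sup>2 * \<sigma>\<^sup>2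
        + 2 * (1 - \<alpha> k)\<^sup>2 * Lf\<^sup>2 * (\<integral>\<omega>. DD k \<omega> \<partial>M)" .
qed

lemma FIN: "integrable M (EE k) \<and> integrable M (QQ k)"
proof (induction k)
  case 0 then show ?case using EE0_int QQ0_int by simp
next
  case (Suc k) then show ?case using step_int[of k] by simp
qed

lemma EE_int: "integrable M (EE k)" using FIN by simp
lemma QQ_int: "integrable M (QQ k)" using FIN by simp
lemma DD_int: "integrable M (DD k)" using step_int(1)[OF EE_int QQ_int] .
lemma rec: "(\<integral>\<omega>. EE (Suc k) \<omega> \<partial>M) \<le> (1 - \<alpha> k)\<^sup>2 * (\<integral>\<omega>. EE k \<omega> \<partial>M) + 2 * (\<alpha> k)\<^sup>2 * \<sigma>\<^sup>2
        + 2 * (1 - \<alpha> k)\<^sup>2 * Lf\<^sup>2 * (\<integral>\<omega>. DD k \<omega> \<partial>M)"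
  using step_int(4)[OF EE_int QQ_int] .

lemma RR_int: "integrable M (RR k)"
proof -
  have "integrable M (\<lambda>\<omega>. (norm (x (Suc k) \<omega> - z (Suc k) \<omega>))\<^sup>2)" using QQ_int[of "Suc k"] by (simp add: QQ_def[abs_def])
  then show ?thesis unfolding RR_def[abs_def] by auto
qed

lemma RR_nn: "RR k \<omega> \<ge> 0"
  using rho_mono[of k] mu_pos[of "Suc k"] by (simp add: RR_def)

end


context setting
begin

definition Lstar :: real where "Lstar = Fstar f h g - G\<^sup>2 * \<mu>bar / 2"
definition aa :: "nat \<Rightarrow> 'm \<Rightarrow> real" where
  "aa k \<omega> = Lpot f c h g (\<rho> k) (\<mu> k) (x k \<omega>) (z k \<omega>) - Lstar"
definition A0 :: real where "A0 = Lpot f c h g (\<rho> 0) (\<mu> 0) x0 x0 - Lstar"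

lemma aa_nn: "aa k \<omega> \<ge> 0"
  using L_lower[of "\<rho> k" "\<mu> k" "x k \<omega>" "z k \<omega>"] rho_pos[of k] mu_pos[of k] by (simp add: aa_def Lstar_def)

lemma aa0: "aa 0 \<omega> = A0" by (simp add: aa_def A0_def x_0 z_0)

lemma desc_pw: "DD k \<omega> \<le> 8 * \<mu> k * (aa k \<omega> - aa (Suc k) \<omega> + \<mu> k * EE k \<omega> + RR k \<omega>)"
proof -
  define p where "p = (x k \<omega>, z k \<omega>, d k \<omega>)"
  have xs: "Lpot f c h g (\<rho> k) (\<mu> k) (Xup k p) (z k \<omega>)
     \<le> Lpot f c h g (\<rho> k) (\<mu> k) (x k \<omega>) (z k \<omega>) - (norm (Xup k p - x k \<omega>))\<^sup>2 / (8 * \<mu> k)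
        + \<mu> k * (norm (d k \<omega> - gradf (x k \<omega>)))\<^sup>2"
    unfolding p_def by (rule x_step)
  have zs: "Lpot f c h g (\<rho> k) (\<mu> k) (Xup k p) (Zup k p) \<le> Lpot f c h g (\<rho> k) (\<mu> k) (Xup k p) (z k \<omega>)"
    using z_step[of k p] by (simp add: p_def)
  have ps: "Lpot f c h g (\<rho> (Suc k)) (\<mu> (Suc k)) (Xup k p) (Zup k p) \<le> Lpot f c h g (\<rho> k) (\<mu> k) (Xup k p) (Zup k p)
      + (\<rho> (Suc k) - \<rho> k) / 2 * C\<^sup>2 + \<bar>\<mu> k - \<mu> (Suc k)\<bar> / (2 * (\<mu> (Suc k))\<^sup>2) * (C\<^sup>2 + (norm (Xup k p - Zup k p))\<^sup>2)"
    by (rule param_step[OF rho_mono mu_pos mu_mono])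
  have X: "x (Suc k) \<omega> = Xup k p" "z (Suc k) \<omega> = Zup k p" by (simp_all add: p_def x_Suc' z_Suc')
  have "DD k \<omega> / (8 * \<mu> k) \<le> aa k \<omega> - aa (Suc k) \<omega> + \<mu> k * EE k \<omega> + RR k \<omega>"
    using xs zs ps unfolding aa_def DD_def EE_def RR_def X by linarith
  then have "8 * \<mu> k * (DD k \<omega> / (8 * \<mu> k)) \<le> 8 * \<mu> k * (aa k \<omega> - aa (Suc k) \<omega> + \<mu> k * EE k \<omega> + RR k \<omega>)"
    using mu_pos[of k] by (intro mult_left_mono) auto
  then show ?thesis using mu_pos[of k] by simp
qed

lemma pw_b: "2 * Lf\<^sup>2 * DD k \<omega> \<le> 16 * Lf\<^sup>2 * (\<mu> k * (aa k \<omega> - aa (Suc k) \<omega>)) + \<alpha> k / 2 * EE k \<omega> + 16 * Lf\<^sup>2 * \<mu> 0 * RR k \<omega>"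
proof -
  have "2 * Lf\<^sup>2 * DD k \<omega> \<le> 2 * Lf\<^sup>2 * (8 * \<mu> k * (aa k \<omega> - aa (Suc k) \<omega> + \<mu> k * EE k \<omega> + RR k \<omega>))"
    by (intro mult_left_mono desc_pw) auto
  also have "\<dots> = 16 * Lf\<^sup>2 * (\<mu> k * (aa k \<omega> - aa (Suc k) \<omega>)) + (16 * Lf\<^sup>2 * (\<mu> k)\<^sup>2) * EE k \<omega> + 16 * Lf\<^sup>2 * \<mu> k * RR k \<omega>"
    by (simp add: algebra_simps power2_eq_square)
  also have "(16 * Lf\<^sup>2 * (\<mu> k)\<^sup>2) * EE k \<omega> \<le> (\<alpha> k / 2) * EE k \<omega>"
  proof (rule mult_right_mono[OF _ EE_nn])
    have "16 * Lf\<^sup>2 * (\<mu> k)\<^sup>2 = (32 * (\<mu> k)\<^sup>2 * Lf\<^sup>2) / 2" by (simp add: algebra_simps)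
    then show "16 * Lf\<^sup>2 * (\<mu> k)\<^sup>2 \<le> \<alpha> k / 2" using alpha(2)[of k] by linarith
  qed
  also have "16 * Lf\<^sup>2 * \<mu> k * RR k \<omega> \<le> 16 * Lf\<^sup>2 * \<mu> 0 * RR k \<omega>"
    using mu_le0[of k] RR_nn[of k \<omega>] by (intro mult_right_mono mult_left_mono) auto
  finally show ?thesis by simp
qed

lemma pw_sum: "(\<Sum>k<K. 2 * Lf\<^sup>2 * DD k \<omega>) \<le> 16 * Lf\<^sup>2 * \<mu> 0 * A0 + (\<Sum>k<K. \<alpha> k / 2 * EE k \<omega>) + 16 * Lf\<^sup>2 * \<mu> 0 * (\<Sum>k<K. RR k \<omega>)"
proof -
  have "(\<Sum>k<K. 2 * Lf\<^sup>2 * DD k \<omega>) \<le> (\<Sum>k<K. 16 * Lf\<^sup>2 * (\<mu> k * (aa k \<omega> - aa (Suc k) \<omega>)) + \<alpha> k / 2 * EE k \<omega> + 16 * Lf\<^sup>2 * \<mu> 0 * RR k \<omega>)"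
    by (rule sum_mono) (rule pw_b)
  also have "\<dots> = 16 * Lf\<^sup>2 * (\<Sum>k<K. \<mu> k * (aa k \<omega> - aa (Suc k) \<omega>)) + (\<Sum>k<K. \<alpha> k / 2 * EE k \<omega>) + 16 * Lf\<^sup>2 * \<mu> 0 * (\<Sum>k<K. RR k \<omega>)"
    by (simp add: sum.distrib sum_distrib_left)
  finally have S1: "(\<Sum>k<K. 2 * Lf\<^sup>2 * DD k \<omega>) \<le> 16 * Lf\<^sup>2 * (\<Sum>k<K. \<mu> k * (aa k \<omega> - aa (Suc k) \<omega>)) + (\<Sum>k<K. \<alpha> k / 2 * EE k \<omega>) + 16 * Lf\<^sup>2 * \<mu> 0 * (\<Sum>k<K. RR k \<omega>)" .
  have "(\<Sum>k<K. \<mu> k * (aa k \<omega> - aa (Suc k) \<omega>)) \<le> \<mu> 0 * aa 0 \<omega> - \<mu> K * aa K \<omega>"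
    by (rule telescope_weighted[where m=\<mu> and b="\<lambda>k. aa k \<omega>"]) (use mu_mono mu_pos aa_nn in \<open>auto intro: less_imp_le\<close>)
  also have "\<mu> 0 * aa 0 \<omega> - \<mu> K * aa K \<omega> \<le> \<mu> 0 * A0"
    using aa0[of \<omega>] mu_pos[of K] aa_nn[of K \<omega>] by simp
  finally have T: "(\<Sum>k<K. \<mu> k * (aa k \<omega> - aa (Suc k) \<omega>)) \<le> \<mu> 0 * A0" .
  have "16 * Lf\<^sup>2 * (\<Sum>k<K. \<mu> k * (aa k \<omega> - aa (Suc k) \<omega>)) \<le> 16 * Lf\<^sup>2 * (\<mu> 0 * A0)"
    by (rule mult_left_mono[OF T]) simp
  moreover have "16 * Lf\<^sup>2 * (\<mu> 0 * A0) = 16 * Lf\<^sup>2 * \<mu> 0 * A0" by simp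
  ultimately show ?thesis using S1 by linarith
qed

definition EI :: "nat \<Rightarrow> real" where "EI k = (\<integral>\<omega>. EE k \<omega> \<partial>M)"
definition DI :: "nat \<Rightarrow> real" where "DI k = (\<integral>\<omega>. DD k \<omega> \<partial>M)"
definition RI :: "nat \<Rightarrow> real" where "RI k = (\<integral>\<omega>. RR k \<omega> \<partial>M)"

lemma EI_nn: "EI k \<ge> 0" unfolding EI_def by (intro integral_nonneg_AE AE_I2 EE_nn)
lemma DI_nn: "DI k \<ge> 0" unfolding DI_def by (intro integral_nonneg_AE AE_I2 DD_nn)

lemma int_sum: "2 * Lf\<^sup>2 * (\<Sum>k<K. DI k) \<le> 16 * Lf\<^sup>2 * \<mu> 0 * A0 + (\<Sum>k<K. \<alpha> k / 2 * EI k) + 16 * Lf\<^sup>2 * \<mu> 0 * (\<Sum>k<K. RI k)"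
proof -
  have "(\<integral>\<omega>. (\<Sum>k<K. 2 * Lf\<^sup>2 * DD k \<omega>) \<partial>M) \<le> (\<integral>\<omega>. 16 * Lf\<^sup>2 * \<mu> 0 * A0 + (\<Sum>k<K. \<alpha> k / 2 * EE k \<omega>) + 16 * Lf\<^sup>2 * \<mu> 0 * (\<Sum>k<K. RR k \<omega>) \<partial>M)"
    by (rule integral_mono) (use DD_int EE_int RR_int pw_sum in auto)
  moreover have "(\<integral>\<omega>. (\<Sum>k<K. 2 * Lf\<^sup>2 * DD k \<omega>) \<partial>M) = 2 * Lf\<^sup>2 * (\<Sum>k<K. DI k)"
    using DD_int by (simp add: DI_def integral_sum sum_distrib_left)
  moreover have "(\<integral>\<omega>. 16 * Lf\<^sup>2 * \<mu> 0 * A0 + (\<Sum>k<K. \<alpha> k / 2 * EE k \<omega>) + 16 * Lf\<^sup>2 * \<mu> 0 * (\<Sum>k<K. RR k \<omega>) \<partial>M)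
      = 16 * Lf\<^sup>2 * \<mu> 0 * A0 + (\<Sum>k<K. \<alpha> k / 2 * EI k) + 16 * Lf\<^sup>2 * \<mu> 0 * (\<Sum>k<K. RI k)"
    using EE_int RR_int by (simp add: EI_def RI_def integral_sum MP.prob_space)
  ultimately show ?thesis by simp
qed

lemma rec_b: "\<alpha> k * EI k \<le> EI k - EI (Suc k) + 2 * (\<alpha> k)\<^sup>2 * \<sigma>\<^sup>2 + 2 * Lf\<^sup>2 * DI k"
proof -
  have r: "EI (Suc k) \<le> (1 - \<alpha> k)\<^sup>2 * EI k + 2 * (\<alpha> k)\<^sup>2 * \<sigma>\<^sup>2 + 2 * (1 - \<alpha> k)\<^sup>2 * Lf\<^sup>2 * DI k"
    using rec[of k] by (simp add: EI_def DI_def)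
  have a: "0 \<le> 1 - \<alpha> k" "1 - \<alpha> k \<le> 1" using alpha(3)[of k] alpha_pos[of k] by auto
  have s1: "(1 - \<alpha> k)\<^sup>2 \<le> 1 - \<alpha> k" using a by (simp add: power2_eq_square mult_le_cancel_left1 mult_right_le_one_le)
  have s2: "(1 - \<alpha> k)\<^sup>2 \<le> 1" using s1 a by linarith
  have "(1 - \<alpha> k)\<^sup>2 * EI k \<le> (1 - \<alpha> k) * EI k" by (rule mult_right_mono[OF s1 EI_nn])
  moreover have "2 * (1 - \<alpha> k)\<^sup>2 * Lf\<^sup>2 * DI k \<le> 2 * 1 * Lf\<^sup>2 * DI k"
    using s2 DI_nn[of k] by (intro mult_right_mono mult_left_mono) auto
  ultimately show ?thesis using r by (simp add: algebra_simps)
qed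

lemma main_sum:
  "(\<Sum>k<K. \<alpha> k * EI k) \<le> 2 * EI 0 + (\<Sum>k<K. 4 * (\<alpha> k)\<^sup>2 * \<sigma>\<^sup>2) + 32 * \<mu> 0 * Lf\<^sup>2 * A0 + 32 * \<mu> 0 * Lf\<^sup>2 * (\<Sum>k<K. RI k)"
proof -
  have "(\<Sum>k<K. \<alpha> k * EI k) \<le> (\<Sum>k<K. (EI k - EI (Suc k)) + 2 * (\<alpha> k)\<^sup>2 * \<sigma>\<^sup>2 + 2 * Lf\<^sup>2 * DI k)"
    by (rule sum_mono) (use rec_b in simp)
  also have "\<dots> = (EI 0 - EI K) + (\<Sum>k<K. 2 * (\<alpha> k)\<^sup>2 * \<sigma>\<^sup>2) + 2 * Lf\<^sup>2 * (\<Sum>k<K. DI k)"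
    by (simp add: sum.distrib sum_distrib_left sum_lessThan_telescope')
  finally have A: "(\<Sum>k<K. \<alpha> k * EI k) \<le> (EI 0 - EI K) + (\<Sum>k<K. 2 * (\<alpha> k)\<^sup>2 * \<sigma>\<^sup>2) + 2 * Lf\<^sup>2 * (\<Sum>k<K. DI k)" .
  have B: "(\<Sum>k<K. \<alpha> k / 2 * EI k) = (\<Sum>k<K. \<alpha> k * EI k) / 2" by (simp add: sum_divide_distrib)
  have C: "(\<Sum>k<K. 4 * (\<alpha> k)\<^sup>2 * \<sigma>\<^sup>2) = 2 * (\<Sum>k<K. 2 * (\<alpha> k)\<^sup>2 * \<sigma>\<^sup>2)" by (simp add: sum_distrib_left mult.assoc)
  show ?thesis using A B C int_sum[of K] EI_nn[of K] by (simp add: algebra_simps)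
qed

end


context setting
begin

lemma eE: "(\<integral>\<omega>. (norm ((d k \<omega> + r *\<^sub>R gradc Dc (x k \<omega>) (c (x k \<omega>))) - gradQ gradf Dc c r (x k \<omega>)))\<^sup>2 \<partial>M) = EI k"
  by (simp add: e_eq EE_def[abs_def] EI_def)

lemma eR: "(\<rho> (Suc k) - \<rho> k) / 2 * C\<^sup>2
     + (\<integral>\<omega>. \<bar>\<mu> k - \<mu> (Suc k)\<bar> / (2 * (\<mu> (Suc k))\<^sup>2) * (C\<^sup>2 + (norm (x (Suc k) \<omega> - z (Suc k) \<omega>))\<^sup>2) \<partial>M) = RI k"
proof -
  have "integrable M (\<lambda>\<omega>. (norm (x (Suc k) \<omega> - z (Suc k) \<omega>))\<^sup>2)" using QQ_int[of "Suc k"] by (simp add: QQ_def[abs_def])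
  then have I: "integrable M (\<lambda>\<omega>. \<bar>\<mu> k - \<mu> (Suc k)\<bar> / (2 * (\<mu> (Suc k))\<^sup>2) * (C\<^sup>2 + (norm (x (Suc k) \<omega> - z (Suc k) \<omega>))\<^sup>2))"
    by auto
  show ?thesis unfolding RI_def RR_def using I by (simp add: MP.prob_space)
qed

lemma A0_eq: "Lpot f c h g (\<rho> 0) (\<mu> 0) x0 x0 - (Fstar f h g - G\<^sup>2 * \<mu>bar / 2) = A0"
  by (simp add: A0_def Lstar_def)

lemma final:
  shows
    "(\<forall>K\<ge>1.
       (1 / real K) * (\<Sum>k<K. \<alpha> k * (\<integral>\<omega>. (norm ((d k \<omega> + \<rho> k *\<^sub>R gradc Dc (x k \<omega>) (c (x k \<omega>)))
                                       - gradQ gradf Dc c (\<rho> k) (x k \<omega>)))\<^sup>2 \<partial>M))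
       \<le> 32 * \<mu> 0 * Lf\<^sup>2 * (Lpot f c h g (\<rho> 0) (\<mu> 0) x0 x0 - (Fstar f h g - G\<^sup>2 * \<mu>bar / 2)) / real K
         + 2 * (\<integral>\<omega>. (norm ((d 0 \<omega> + \<rho> 0 *\<^sub>R gradc Dc (x 0 \<omega>) (c (x 0 \<omega>)))
                                       - gradQ gradf Dc c (\<rho> 0) (x 0 \<omega>)))\<^sup>2 \<partial>M) / real K
         + 32 * \<mu> 0 * Lf\<^sup>2 / real K *
           (\<Sum>k<K. (\<rho> (Suc k) - \<rho> k) / 2 * C\<^sup>2
              + (\<integral>\<omega>. \<bar>\<mu> k - \<mu> (Suc k)\<bar> / (2 * (\<mu> (Suc k))\<^sup>2)
                        * (C\<^sup>2 + (norm (x (Suc k) \<omega> - z (Suc k) \<omega>))\<^sup>2) \<partial>M))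
         + (1 / real K) * (\<Sum>k<K. 4 * (\<alpha> k)\<^sup>2 * \<sigma>\<^sup>2))
     \<and>
     ((\<forall>k. \<mu> k = \<mu> 0 \<and> \<alpha> k = \<alpha> 0 \<and> \<rho> k = \<rho> 0) \<longrightarrow>
      (\<forall>K\<ge>1.
       (1 / real K) * (\<Sum>k<K. (\<integral>\<omega>. (norm ((d k \<omega> + \<rho> 0 *\<^sub>R gradc Dc (x k \<omega>) (c (x k \<omega>)))
                                       - gradQ gradf Dc c (\<rho> 0) (x k \<omega>)))\<^sup>2 \<partial>M))
       \<le> 32 * \<mu> 0 * Lf\<^sup>2 * (Lpot f c h g (\<rho> 0) (\<mu> 0) x0 x0 - (Fstar f h g - G\<^sup>2 * \<mu>bar / 2))
             / (\<alpha> 0 * real K)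
         + 2 * (\<integral>\<omega>. (norm ((d 0 \<omega> + \<rho> 0 *\<^sub>R gradc Dc (x 0 \<omega>) (c (x 0 \<omega>)))
                                       - gradQ gradf Dc c (\<rho> 0) (x 0 \<omega>)))\<^sup>2 \<partial>M) / (\<alpha> 0 * real K)
         + 4 * \<alpha> 0 * \<sigma>\<^sup>2))"
proof (intro conjI allI impI)
  fix K :: nat assume K1: "K \<ge> 1"
  have Kp: "real K > 0" using K1 by simp
  have M: "(\<Sum>k<K. \<alpha> k * EI k) \<le> 2 * EI 0 + (\<Sum>k<K. 4 * (\<alpha> k)\<^sup>2 * \<sigma>\<^sup>2) + 32 * \<mu> 0 * Lf\<^sup>2 * A0 + 32 * \<mu> 0 * Lf\<^sup>2 * (\<Sum>k<K. RI k)"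
    by (rule main_sum)
  then have "(1 / real K) * (\<Sum>k<K. \<alpha> k * EI k) \<le> (1 / real K) * (2 * EI 0 + (\<Sum>k<K. 4 * (\<alpha> k)\<^sup>2 * \<sigma>\<^sup>2) + 32 * \<mu> 0 * Lf\<^sup>2 * A0 + 32 * \<mu> 0 * Lf\<^sup>2 * (\<Sum>k<K. RI k))"
    by (rule mult_left_mono) (use Kp in simp)
  also have "\<dots> = 32 * \<mu> 0 * Lf\<^sup>2 * A0 / real K + 2 * EI 0 / real K + 32 * \<mu> 0 * Lf\<^sup>2 / real K * (\<Sum>k<K. RI k)
      + (1 / real K) * (\<Sum>k<K. 4 * (\<alpha> k)\<^sup>2 * \<sigma>\<^sup>2)"
    using Kp by (simp add: field_simps)
  finally show "(1 / real K) * (\<Sum>k<K. \<alpha> k * (\<integral>\<omega>. (norm ((d k \<omega> + \<rho> k *\<^sub>R gradc Dc (x k \<omega>) (c (x k \<omega>)))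
                                       - gradQ gradf Dc c (\<rho> k) (x k \<omega>)))\<^sup>2 \<partial>M))
       \<le> 32 * \<mu> 0 * Lf\<^sup>2 * (Lpot f c h g (\<rho> 0) (\<mu> 0) x0 x0 - (Fstar f h g - G\<^sup>2 * \<mu>bar / 2)) / real K
         + 2 * (\<integral>\<omega>. (norm ((d 0 \<omega> + \<rho> 0 *\<^sub>R gradc Dc (x 0 \<omega>) (c (x 0 \<omega>)))
                                       - gradQ gradf Dc c (\<rho> 0) (x 0 \<omega>)))\<^sup>2 \<partial>M) / real K
         + 32 * \<mu> 0 * Lf\<^sup>2 / real K *
           (\<Sum>k<K. (\<rho> (Suc k) - \<rho> k) / 2 * C\<^sup>2
              + (\<integral>\<omega>. \<bar>\<mu> k - \<mu> (Suc k)\<bar> / (2 * (\<mu> (Suc k))\<^sup>2)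
                        * (C\<^sup>2 + (norm (x (Suc k) \<omega> - z (Suc k) \<omega>))\<^sup>2) \<partial>M))
         + (1 / real K) * (\<Sum>k<K. 4 * (\<alpha> k)\<^sup>2 * \<sigma>\<^sup>2)"
    unfolding eE eR A0_eq .
next
  fix K :: nat
  assume cst: "\<forall>k. \<mu> k = \<mu> 0 \<and> \<alpha> k = \<alpha> 0 \<and> \<rho> k = \<rho> 0" and K1: "K \<ge> 1"
  have Kp: "real K > 0" using K1 by simp
  have ap: "\<alpha> 0 > 0" by (rule alpha_pos)
  have R0: "RI k = 0" for k
  proof -
    have "\<rho> (Suc k) = \<rho> k" "\<mu> (Suc k) = \<mu> k" using cst by metis+
    then show ?thesis by (simp add: RI_def RR_def)
  qed
  have aeq: "\<alpha> k = \<alpha> 0" for k using cst by blast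
  have "(\<Sum>k<K. \<alpha> k * EI k) = (\<Sum>k<K. \<alpha> 0 * EI k)" by (rule sum.cong[OF refl]) (metis aeq)
  then have S1: "(\<Sum>k<K. \<alpha> k * EI k) = \<alpha> 0 * (\<Sum>k<K. EI k)" by (simp add: sum_distrib_left)
  have "(\<Sum>k<K. 4 * (\<alpha> k)\<^sup>2 * \<sigma>\<^sup>2) = (\<Sum>k<K. 4 * (\<alpha> 0)\<^sup>2 * \<sigma>\<^sup>2)" by (rule sum.cong[OF refl]) (metis aeq)
  then have S2: "(\<Sum>k<K. 4 * (\<alpha> k)\<^sup>2 * \<sigma>\<^sup>2) = real K * (4 * (\<alpha> 0)\<^sup>2 * \<sigma>\<^sup>2)" by simp
  have M: "\<alpha> 0 * (\<Sum>k<K. EI k) \<le> 2 * EI 0 + real K * (4 * (\<alpha> 0)\<^sup>2 * \<sigma>\<^sup>2) + 32 * \<mu> 0 * Lf\<^sup>2 * A0"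
    using main_sum[of K] unfolding S1 S2 R0 by simp
  have "(1 / real K) * (\<Sum>k<K. EI k) = (\<alpha> 0 * (\<Sum>k<K. EI k)) / (\<alpha> 0 * real K)"
    using Kp ap by (simp add: field_simps)
  also have "\<dots> \<le> (2 * EI 0 + real K * (4 * (\<alpha> 0)\<^sup>2 * \<sigma>\<^sup>2) + 32 * \<mu> 0 * Lf\<^sup>2 * A0) / (\<alpha> 0 * real K)"
    by (rule divide_right_mono[OF M]) (use Kp ap in simp)
  also have "\<dots> = 32 * \<mu> 0 * Lf\<^sup>2 * A0 / (\<alpha> 0 * real K) + 2 * EI 0 / (\<alpha> 0 * real K) + 4 * \<alpha> 0 * \<sigma>\<^sup>2"
    using Kp ap by (simp add: field_simps power2_eq_square)
  finally show "(1 / real K) * (\<Sum>k<K. (\<integral>\<omega>. (norm ((d k \<omega> + \<rho> 0 *\<^sub>R gradc Dc (x k \<omega>) (c (x k \<omega>)))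
                                       - gradQ gradf Dc c (\<rho> 0) (x k \<omega>)))\<^sup>2 \<partial>M))
       \<le> 32 * \<mu> 0 * Lf\<^sup>2 * (Lpot f c h g (\<rho> 0) (\<mu> 0) x0 x0 - (Fstar f h g - G\<^sup>2 * \<mu>bar / 2))
             / (\<alpha> 0 * real K)
         + 2 * (\<integral>\<omega>. (norm ((d 0 \<omega> + \<rho> 0 *\<^sub>R gradc Dc (x 0 \<omega>) (c (x 0 \<omega>)))
                                       - gradQ gradf Dc c (\<rho> 0) (x 0 \<omega>)))\<^sup>2 \<partial>M) / (\<alpha> 0 * real K)
         + 4 * \<alpha> 0 * \<sigma>\<^sup>2"
    unfolding eE A0_eq .
qed

end

theorem lemmaC11:
  fixes M :: "'m measure" and \<Xi> :: "'s measure"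
    and Fs :: "'a::euclidean_space \<Rightarrow> 's \<Rightarrow> real" and gradF :: "'a \<Rightarrow> 's \<Rightarrow> 'a"
    and f :: "'a \<Rightarrow> real" and gradf :: "'a \<Rightarrow> 'a"
    and c :: "'a \<Rightarrow> 'b::euclidean_space" and Dc :: "'a \<Rightarrow> 'a \<Rightarrow> 'b"
    and h g :: "'a \<Rightarrow> real"
    and L\<^sub>f L\<^sub>c C G \<sigma> :: real
    and b\<^sub>0 :: nat and Xs :: "nat + nat \<Rightarrow> 'm \<Rightarrow> 's"
    and x z d :: "nat \<Rightarrow> 'm \<Rightarrow> 'a" and x\<^sub>0 :: 'a
    and \<alpha> \<mu> \<rho> :: "nat \<Rightarrow> real" and \<beta> \<mu>bar :: real
  assumes
    \<comment> \<open>f(x) = E_xi[F(x,xi)], stochastic gradients (A2), (A4)\<close>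
    prob_Xi: "prob_space \<Xi>"
    and F_int: "\<And>x. integrable \<Xi> (Fs x)"
    and f_def: "\<And>x. f x = (\<integral>s. Fs x s \<partial>\<Xi>)"
    and F_diff: "AE s in \<Xi>. \<forall>x. ((\<lambda>y. Fs y s) has_derivative (\<lambda>v. gradF x s \<bullet> v)) (at x)"
    and gradF_meas: "(\<lambda>(x, s). gradF x s) \<in> borel_measurable (borel \<Otimes>\<^sub>M \<Xi>)"
    and A2_int: "\<And>x. integrable \<Xi> (gradF x)"
    and A2_unbiased: "\<And>x. (\<integral>s. gradF x s \<partial>\<Xi>) = gradf x"
    and A2_var: "\<And>x. (\<integral>\<^sup>+ s. ennreal ((norm (gradF x s - gradf x))\<^sup>2) \<partial>\<Xi>) \<le> ennreal (\<sigma>\<^sup>2)"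
    and A4: "\<And>x y. (\<integral>\<^sup>+ s. ennreal ((norm (gradF x s - gradF y s))\<^sup>2) \<partial>\<Xi>)
                   \<le> ennreal (L\<^sub>f\<^sup>2 * (norm (x - y))\<^sup>2)"
    \<comment> \<open>(A1)\<close>
    and f_grad: "\<And>x. (f has_derivative (\<lambda>v. gradf x \<bullet> v)) (at x)"
    and f_smooth: "\<And>x y. norm (gradf x - gradf y) \<le> L\<^sub>f * norm (x - y)"
    and c_deriv: "\<And>x. (c has_derivative Dc x) (at x)"
    and c_smooth: "\<And>x y. onorm (\<lambda>v. gradc Dc x v - gradc Dc y v) \<le> L\<^sub>c * norm (x - y)"
    and h_convex: "convex_on UNIV h" and g_convex: "convex_on UNIV g"
    and C_pos: "C > 0" and G_pos: "G > 0"
    and gradf_bd: "\<And>x. norm (gradf x) \<le> G"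
    and h_subgrad_bd: "\<And>x v. v \<in> subdiff h x \<Longrightarrow> norm v \<le> G"
    and g_subgrad_bd: "\<And>x v. v \<in> subdiff g x \<Longrightarrow> norm v \<le> G"
    and gradc_bd: "\<And>x. onorm (gradc Dc x) \<le> G"
    and c_bd: "\<And>x. norm (c x) \<le> C"
    \<comment> \<open>F^* > -infinity\<close>
    and Fstar_finite: "bdd_below (range (\<lambda>x. f x + h x - g x))"
    \<comment> \<open>parameters\<close>
    and rho0_pos: "\<rho> 0 > 0"
    and mu_pos: "\<And>k. \<mu> k > 0"
    and step: "\<And>k. \<mu> k * (\<rho> k * (L\<^sub>f / \<rho> 0 + G\<^sup>2 + C * L\<^sub>c)) \<le> 1 / 4"
    and mu_mono: "\<And>k. \<mu> (Suc k) \<le> \<mu> k"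
    and rho_mono: "\<And>k. \<rho> k \<le> \<rho> (Suc k)"
    and beta: "0 < \<beta>" "\<beta> \<le> 1"
    and alpha: "\<And>k. 0 < 32 * (\<mu> k)\<^sup>2 * L\<^sub>f\<^sup>2" "\<And>k. 32 * (\<mu> k)\<^sup>2 * L\<^sub>f\<^sup>2 \<le> \<alpha> k" "\<And>k. \<alpha> k \<le> 1"
    and mubar: "\<And>k. \<mu> k \<le> \<mu>bar"
    \<comment> \<open>i.i.d. samples: batch xi^0_j (j < b0) and xi^k (k >= 1)\<close>
    and prob_M: "prob_space M"
    and b0_pos: "b\<^sub>0 \<ge> 1"
    and Xs_indep: "prob_space.indep_vars M (\<lambda>_. \<Xi>) Xs (Inl ` {..<b\<^sub>0} \<union> Inr ` {1..})"
    and Xs_distr: "\<And>i. i \<in> Inl ` {..<b\<^sub>0} \<union> Inr ` {1..} \<Longrightarrow> distr M \<Xi> (Xs i) = \<Xi>"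
    \<comment> \<open>MoSSP-R iterates\<close>
    and x_0: "\<And>\<omega>. x 0 \<omega> = x\<^sub>0" and z_0: "\<And>\<omega>. z 0 \<omega> = x\<^sub>0"
    and d_0: "\<And>\<omega>. d 0 \<omega> = (1 / real b\<^sub>0) *\<^sub>R (\<Sum>j<b\<^sub>0. gradF x\<^sub>0 (Xs (Inl j) \<omega>))"
    and d_Suc: "\<And>k \<omega>. d (Suc k) \<omega> = gradF (x (Suc k) \<omega>) (Xs (Inr (Suc k)) \<omega>)
                  + (1 - \<alpha> k) *\<^sub>R (d k \<omega> - gradF (x k \<omega>) (Xs (Inr (Suc k)) \<omega>))"
    and x_Suc: "\<And>k \<omega>. x (Suc k) \<omega> = prox (\<mu> k) h
                  (z k \<omega> - \<mu> k *\<^sub>R (d k \<omega> + \<rho> k *\<^sub>R gradc Dc (x k \<omega>) (c (x k \<omega>))))"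
    and z_Suc: "\<And>k \<omega>. z (Suc k) \<omega> = z k \<omega> - \<beta> *\<^sub>R (prox (\<mu> k) g (z k \<omega>) - x (Suc k) \<omega>)"
  shows
    "(\<forall>K\<ge>1.
       (1 / real K) * (\<Sum>k<K. \<alpha> k * (\<integral>\<omega>. (norm ((d k \<omega> + \<rho> k *\<^sub>R gradc Dc (x k \<omega>) (c (x k \<omega>)))
                                       - gradQ gradf Dc c (\<rho> k) (x k \<omega>)))\<^sup>2 \<partial>M))
       \<le> 32 * \<mu> 0 * L\<^sub>f\<^sup>2 * (Lpot f c h g (\<rho> 0) (\<mu> 0) x\<^sub>0 x\<^sub>0 - (Fstar f h g - G\<^sup>2 * \<mu>bar / 2)) / real K
         + 2 * (\<integral>\<omega>. (norm ((d 0 \<omega> + \<rho> 0 *\<^sub>R gradc Dc (x 0 \<omega>) (c (x 0 \<omega>)))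
                                       - gradQ gradf Dc c (\<rho> 0) (x 0 \<omega>)))\<^sup>2 \<partial>M) / real K
         + 32 * \<mu> 0 * L\<^sub>f\<^sup>2 / real K *
           (\<Sum>k<K. (\<rho> (Suc k) - \<rho> k) / 2 * C\<^sup>2
              + (\<integral>\<omega>. \<bar>\<mu> k - \<mu> (Suc k)\<bar> / (2 * (\<mu> (Suc k))\<^sup>2)
                        * (C\<^sup>2 + (norm (x (Suc k) \<omega> - z (Suc k) \<omega>))\<^sup>2) \<partial>M))
         + (1 / real K) * (\<Sum>k<K. 4 * (\<alpha> k)\<^sup>2 * \<sigma>\<^sup>2))
     \<and>
     ((\<forall>k. \<mu> k = \<mu> 0 \<and> \<alpha> k = \<alpha> 0 \<and> \<rho> k = \<rho> 0) \<longrightarrow>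
      (\<forall>K\<ge>1.
       (1 / real K) * (\<Sum>k<K. (\<integral>\<omega>. (norm ((d k \<omega> + \<rho> 0 *\<^sub>R gradc Dc (x k \<omega>) (c (x k \<omega>)))
                                       - gradQ gradf Dc c (\<rho> 0) (x k \<omega>)))\<^sup>2 \<partial>M))
       \<le> 32 * \<mu> 0 * L\<^sub>f\<^sup>2 * (Lpot f c h g (\<rho> 0) (\<mu> 0) x\<^sub>0 x\<^sub>0 - (Fstar f h g - G\<^sup>2 * \<mu>bar / 2))
             / (\<alpha> 0 * real K)
         + 2 * (\<integral>\<omega>. (norm ((d 0 \<omega> + \<rho> 0 *\<^sub>R gradc Dc (x 0 \<omega>) (c (x 0 \<omega>)))
                                       - gradQ gradf Dc c (\<rho> 0) (x 0 \<omega>)))\<^sup>2 \<partial>M) / (\<alpha> 0 * real K)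
         + 4 * \<alpha> 0 * \<sigma>\<^sup>2))"
proof -
  interpret setting M \<Xi> gradF f gradf c Dc h g "L\<^sub>f" "L\<^sub>c" C G \<sigma> "b\<^sub>0" Xs x z d "x\<^sub>0" \<alpha> \<mu> \<rho> \<beta> \<mu>bar
    by (rule setting.intro) (fact assms)+
  show ?thesis by (rule final)
qed



end
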